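(* Let $\Omega\subset\mathbb{R}^n$ ($n=2$ or $3$) be a bounded, open, connected domain with Lipschitz boundary and outward unit normal $\bm{n}$. Let $\kappa:\Omega\to\mathbb{R}$ and $\lambda=1/\kappa$, with $\lambda\in C^1(\Omega)$ and constants $0<\kappa_{\min}\le\kappa_{\max}$, $0<\lambda_{\min}\le\lambda_{\max}$ such that $\kappa_{\min}\le\kappa\le\kappa_{\max}$ and $\lambda_{\min}\le\lambda\le\lambda_{\max}$ on $\Omega$. Let $f\in L^2(\Omega)$ with $\int_\Omega f\,d\Omega=0$. Let $$\mathcal{U}=\{\bm{v}\in[L^2(\Omega)]^n:\ \operatorname{div}\bm{v}\in L^2(\Omega),\ \operatorname{curl}(\lambda\bm{v})\in[L^2(\Omega)]^{2n-3},\ \bm{v}\cdot\bm{n}=0\text{ on }\partial\Omega\},\qquad \mathcal{P}=\{q\in H^1(\Omega):\ (q,1)=0\},$$ with norm $\|\{\bm{u},p\}\|_{\mathcal{U}\times\mathcal{P}}^2=\|\bm{u}\|^2+\|\operatorname{div}\bm{u}\|^2+\|\operatorname{curl}(\lambda\bm{u})\|^2+\|\nabla p\|^2$, $$B_{\mathrm{CGLS}}(\{\bm{u},p\};\{\bm{v},q\})=(\lambda\bm{u},\bm{v})-(\operatorname{div}\bm{v},p)-(\operatorname{div}\bm{u},q)-\tfrac12\big(\kappa(\lambda\bm{u}+\nabla p),\lambda\bm{v}+\nabla q\big)+\tfrac12(\lambda\operatorname{div}\bm{u},\operatorname{div}\bm{v})+\tfrac12\big(\kappa\operatorname{curl}(\lambda\bm{u}),\operatorname{curl}(\lambda\bm{v})\big),$$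 $$F_{\mathrm{CGLS}}(\{\bm{v},q\})=-(f,q)+\tfrac12(\lambda f,\operatorname{div}\bm{v}).$$ Let $M>0$ be a constant with $|B_{\mathrm{CGLS}}(\{\bm{u},p\},\{\bm{v},q\})|\le M\|\{\bm{u},p\}\|_{\mathcal{U}\times\mathcal{P}}\|\{\bm{v},q\}\|_{\mathcal{U}\times\mathcal{P}}$ for all arguments in $\mathcal{U}\times\mathcal{P}$, and let $\alpha=\tfrac12\min\{\lambda_{\min},\kappa_{\min}\}$. Let $\{\mathcal{T}_h\}$ be a family of partitions of $\Omega$ into elements $\Omega^e$ of maximal diameter $h$, $\mathcal{S}_h^m=\{\varphi_h\in C^0(\Omega):\ \varphi_h|_{\Omega^e}\in\mathbb{P}_m(\Omega^e)\ \forall\Omega^e\}$, $\mathcal{U}_h^l=[\mathcal{S}_h^l]^n\cap\mathcal{U}$, $\mathcal{P}_h^k=\mathcal{S}_h^k\cap\mathcal{P}$ for integers $l,k\ge1$. Let $\{\bm{u},p\}\in\mathcal{U}\times\mathcal{P}$ satisfy $B_{\mathrm{CGLS}}(\{\bm{u},p\};\{\bm{v},q\})=F_{\mathrm{CGLS}}(\{\bm{v},q\})$ for all $\{\bm{v},q\}\in\mathcal{U}\times\mathcal{P}$, and $\{\bm{u}_h,p_h\}\in\mathcal{U}_h^l\times\mathcal{P}_h^k$ satisfy $B_{\mathrm{CGLS}}(\{\bm{u}_h,p_h\};\{\bm{v}_h,q_h\})=F_{\mathrm{CGLS}}(\{\bm{v}_h,q_h\})$ for all $\{\bm{v}_h,q_h\}\in\mathcal{U}_h^l\times\mathcal{P}_h^k$.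 Then $$\|\{\bm{u}-\bm{u}_h,p-p_h\}\|_{\mathcal{U}\times\mathcal{P}}\le\frac{M}{\alpha}\,\|\{\bm{u}-\bm{v}_h,p-q_h\}\|_{\mathcal{U}\times\mathcal{P}}\quad\text{for all }\{\bm{v}_h,q_h\}\in\mathcal{U}_h^l\times\mathcal{P}_h^k.$$
   Context: $(\cdot,\cdot)$ and $\|\cdot\|$ denote the $L^2(\Omega)$ inner product and norm. $\mathbb{P}_m(\Omega^e)$ is the set of polynomials of degree at most $m$ on $\Omega^e$. For $n=3$, $\operatorname{curl}$ is the usual curl; for $n=2$, $\operatorname{curl}\bm{w}=\partial w_2/\partial x_1-\partial w_1/\partial x_2$ (scalar). *)

theory Defs
  imports "HOL-Analysis.Analysis"
begin

definition L2 :: "'a::euclidean_space set \<Rightarrow> ('a \<Rightarrow> real) \<Rightarrow> bool" where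
  "L2 \<Omega> f \<longleftrightarrow> f \<in> borel_measurable (lebesgue_on \<Omega>) \<and>
     integrable (lebesgue_on \<Omega>) (\<lambda>x. (f x)\<^sup>2)"

definition L2v :: "'a::euclidean_space set \<Rightarrow> ('a \<Rightarrow> 'a) \<Rightarrow> bool" where
  "L2v \<Omega> v \<longleftrightarrow> (\<forall>i\<in>Basis. L2 \<Omega> (\<lambda>x. v x \<bullet> i))"

definition ip :: "'a::euclidean_space set \<Rightarrow> ('a \<Rightarrow> real) \<Rightarrow> ('a \<Rightarrow> real) \<Rightarrow> real" where
  "ip \<Omega> f g = integral\<^sup>L (lebesgue_on \<Omega>) (\<lambda>x. f x * g x)"

definition ipv :: "'a::euclidean_space set \<Rightarrow> ('a \<Rightarrow> 'a) \<Rightarrow> ('a \<Rightarrow> 'a) \<Rightarrow> real" where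
  "ipv \<Omega> v w = integral\<^sup>L (lebesgue_on \<Omega>) (\<lambda>x. v x \<bullet> w x)"

definition pd :: "('a::euclidean_space \<Rightarrow> real) \<Rightarrow> 'a \<Rightarrow> 'a \<Rightarrow> real" where
  "pd \<phi> x i = frechet_derivative \<phi> (at x) i"

definition cgrad :: "('a::euclidean_space \<Rightarrow> real) \<Rightarrow> 'a \<Rightarrow> 'a" where
  "cgrad \<phi> x = (\<Sum>i\<in>Basis. pd \<phi> x i *\<^sub>R i)"

definition test_fun :: "'a::euclidean_space set \<Rightarrow> ('a \<Rightarrow> real) \<Rightarrow> bool" where
  "test_fun \<Omega> \<phi> \<longleftrightarrow> (\<forall>x. \<phi> differentiable at x) \<and>
     (\<forall>i\<in>Basis. continuous_on UNIV (\<lambda>x. pd \<phi> x i)) \<and>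
     (\<exists>K. compact K \<and> K \<subseteq> \<Omega> \<and> (\<forall>x. x \<notin> K \<longrightarrow> \<phi> x = 0))"

definition is_weak_grad :: "'a::euclidean_space set \<Rightarrow> ('a \<Rightarrow> real) \<Rightarrow> ('a \<Rightarrow> 'a) \<Rightarrow> bool" where
  "is_weak_grad \<Omega> p G \<longleftrightarrow> L2v \<Omega> G \<and>
     (\<forall>\<phi>. test_fun \<Omega> \<phi> \<longrightarrow> (\<forall>i\<in>Basis.
        integral\<^sup>L (lebesgue_on \<Omega>) (\<lambda>x. p x * pd \<phi> x i)
          = - integral\<^sup>L (lebesgue_on \<Omega>) (\<lambda>x. (G x \<bullet> i) * \<phi> x)))"

definition is_weak_div :: "'a::euclidean_space set \<Rightarrow> ('a \<Rightarrow> 'a) \<Rightarrow> ('a \<Rightarrow> real) \<Rightarrow> bool" where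
  "is_weak_div \<Omega> v g \<longleftrightarrow> L2 \<Omega> g \<and>
     (\<forall>\<phi>. test_fun \<Omega> \<phi> \<longrightarrow> ipv \<Omega> v (cgrad \<phi>) = - ip \<Omega> g \<phi>)"

text \<open>Weak curl, represented by its skew components C x i j = d_i w_j - d_j w_i
  (i, j basis vectors).  For n = 2 the only independent component is the scalar curl,
  for n = 3 the three independent components are (up to sign) the components of the
  usual curl.\<close>
definition is_weak_curl :: "'a::euclidean_space set \<Rightarrow> ('a \<Rightarrow> 'a) \<Rightarrow> ('a \<Rightarrow> 'a \<Rightarrow> 'a \<Rightarrow> real) \<Rightarrow> bool" where
  "is_weak_curl \<Omega> w C \<longleftrightarrow> (\<forall>i\<in>Basis. \<forall>j\<in>Basis. L2 \<Omega> (\<lambda>x. C x i j)) \<and>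
     (\<forall>\<phi>. test_fun \<Omega> \<phi> \<longrightarrow> (\<forall>i\<in>Basis. \<forall>j\<in>Basis.
        integral\<^sup>L (lebesgue_on \<Omega>) (\<lambda>x. (w x \<bullet> j) * pd \<phi> x i - (w x \<bullet> i) * pd \<phi> x j)
          = - integral\<^sup>L (lebesgue_on \<Omega>) (\<lambda>x. C x i j * \<phi> x)))"

definition wgrad :: "'a::euclidean_space set \<Rightarrow> ('a \<Rightarrow> real) \<Rightarrow> 'a \<Rightarrow> 'a" where
  "wgrad \<Omega> p = (SOME G. is_weak_grad \<Omega> p G)"

definition wdiv :: "'a::euclidean_space set \<Rightarrow> ('a \<Rightarrow> 'a) \<Rightarrow> 'a \<Rightarrow> real" where
  "wdiv \<Omega> v = (SOME g. is_weak_div \<Omega> v g)"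

definition wcurl :: "'a::euclidean_space set \<Rightarrow> ('a \<Rightarrow> 'a) \<Rightarrow> 'a \<Rightarrow> 'a \<Rightarrow> 'a \<Rightarrow> real" where
  "wcurl \<Omega> w = (SOME C. is_weak_curl \<Omega> w C)"

text \<open>Weighted L2 inner product of curls: (kap curl a, curl b) = integral of
  kap * sum over unordered pairs {i,j} of C_ij D_ij = (1/2) * sum over ordered pairs.\<close>
definition curl_ip :: "'a::euclidean_space set \<Rightarrow> ('a \<Rightarrow> real) \<Rightarrow> ('a \<Rightarrow> 'a \<Rightarrow> 'a \<Rightarrow> real)
     \<Rightarrow> ('a \<Rightarrow> 'a \<Rightarrow> 'a \<Rightarrow> real) \<Rightarrow> real" where
  "curl_ip \<Omega> kap C D = integral\<^sup>L (lebesgue_on \<Omega>)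
     (\<lambda>x. kap x * ((\<Sum>i\<in>Basis. \<Sum>j\<in>Basis. C x i j * D x i j) / 2))"

definition H1 :: "'a::euclidean_space set \<Rightarrow> ('a \<Rightarrow> real) \<Rightarrow> bool" where
  "H1 \<Omega> q \<longleftrightarrow> L2 \<Omega> q \<and> (\<exists>G. is_weak_grad \<Omega> q G)"

text \<open>v . n = 0 on the boundary, in the sense of the normal trace (Green's formula).\<close>
definition normal_trace_zero :: "'a::euclidean_space set \<Rightarrow> ('a \<Rightarrow> 'a) \<Rightarrow> bool" where
  "normal_trace_zero \<Omega> v \<longleftrightarrow>
     (\<forall>\<phi>. H1 \<Omega> \<phi> \<longrightarrow> ipv \<Omega> v (wgrad \<Omega> \<phi>) + ip \<Omega> (wdiv \<Omega> v) \<phi> = 0)"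

definition Uspace :: "'a::euclidean_space set \<Rightarrow> ('a \<Rightarrow> real) \<Rightarrow> ('a \<Rightarrow> 'a) \<Rightarrow> bool" where
  "Uspace \<Omega> lam v \<longleftrightarrow> L2v \<Omega> v \<and> (\<exists>g. is_weak_div \<Omega> v g) \<and>
     (\<exists>C. is_weak_curl \<Omega> (\<lambda>x. lam x *\<^sub>R v x) C) \<and> normal_trace_zero \<Omega> v"

definition Pspace :: "'a::euclidean_space set \<Rightarrow> ('a \<Rightarrow> real) \<Rightarrow> bool" where
  "Pspace \<Omega> q \<longleftrightarrow> H1 \<Omega> q \<and> ip \<Omega> q (\<lambda>_. 1) = 0"

definition normUP :: "'a::euclidean_space set \<Rightarrow> ('a \<Rightarrow> real) \<Rightarrow> ('a \<Rightarrow> 'a) \<Rightarrow> ('a \<Rightarrow> real) \<Rightarrow> real" where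
  "normUP \<Omega> lam u p = sqrt (ipv \<Omega> u u + ip \<Omega> (wdiv \<Omega> u) (wdiv \<Omega> u)
     + curl_ip \<Omega> (\<lambda>_. 1) (wcurl \<Omega> (\<lambda>x. lam x *\<^sub>R u x)) (wcurl \<Omega> (\<lambda>x. lam x *\<^sub>R u x))
     + ipv \<Omega> (wgrad \<Omega> p) (wgrad \<Omega> p))"

definition B_CGLS :: "'a::euclidean_space set \<Rightarrow> ('a \<Rightarrow> real) \<Rightarrow> ('a \<Rightarrow> real)
    \<Rightarrow> ('a \<Rightarrow> 'a) \<Rightarrow> ('a \<Rightarrow> real) \<Rightarrow> ('a \<Rightarrow> 'a) \<Rightarrow> ('a \<Rightarrow> real) \<Rightarrow> real" where
  "B_CGLS \<Omega> lam kap u p v q =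
      ipv \<Omega> (\<lambda>x. lam x *\<^sub>R u x) v - ip \<Omega> (wdiv \<Omega> v) p - ip \<Omega> (wdiv \<Omega> u) q
    - 1/2 * ipv \<Omega> (\<lambda>x. kap x *\<^sub>R (lam x *\<^sub>R u x + wgrad \<Omega> p x)) (\<lambda>x. lam x *\<^sub>R v x + wgrad \<Omega> q x)
    + 1/2 * ip \<Omega> (\<lambda>x. lam x * wdiv \<Omega> u x) (wdiv \<Omega> v)
    + 1/2 * curl_ip \<Omega> kap (wcurl \<Omega> (\<lambda>x. lam x *\<^sub>R u x)) (wcurl \<Omega> (\<lambda>x. lam x *\<^sub>R v x))"

definition F_CGLS :: "'a::euclidean_space set \<Rightarrow> ('a \<Rightarrow> real) \<Rightarrow> ('a \<Rightarrow> real)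
    \<Rightarrow> ('a \<Rightarrow> 'a) \<Rightarrow> ('a \<Rightarrow> real) \<Rightarrow> real" where
  "F_CGLS \<Omega> lam f v q = - ip \<Omega> f q + 1/2 * ip \<Omega> (\<lambda>x. lam x * f x) (wdiv \<Omega> v)"

definition lipschitz_boundary :: "'a::euclidean_space set \<Rightarrow> bool" where
  "lipschitz_boundary \<Omega> \<longleftrightarrow> (\<forall>x0\<in>frontier \<Omega>. \<exists>U R e g L. open U \<and> x0 \<in> U \<and>
     orthogonal_transformation R \<and> e \<in> Basis \<and> L-lipschitz_on UNIV (g :: 'a \<Rightarrow> real) \<and>
     \<Omega> \<inter> U = {y\<in>U. R y \<bullet> e < g (R y - (R y \<bullet> e) *\<^sub>R e)})"

definition C1_on :: "'a::euclidean_space set \<Rightarrow> ('a \<Rightarrow> real) \<Rightarrow> bool" where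
  "C1_on \<Omega> f \<longleftrightarrow> (\<forall>x\<in>\<Omega>. f differentiable at x) \<and>
     (\<forall>i\<in>Basis. continuous_on \<Omega> (\<lambda>x. pd f x i))"

definition is_partition :: "'a::euclidean_space set \<Rightarrow> 'a set set \<Rightarrow> real \<Rightarrow> bool" where
  "is_partition \<Omega> T h \<longleftrightarrow> finite T \<and>
     (\<forall>e\<in>T. compact e \<and> interior e \<noteq> {} \<and> closure (interior e) = e \<and> diameter e \<le> h) \<and>
     (\<exists>e\<in>T. diameter e = h) \<and>
     \<Union>T = closure \<Omega> \<and> pairwise (\<lambda>e e'. interior e \<inter> interior e' = {}) T"

definition multi_idx :: "nat \<Rightarrow> ('a::euclidean_space \<Rightarrow> nat) set" where
  "multi_idx m = {\<alpha>. (\<forall>i. i \<notin> Basis \<longrightarrow> \<alpha> i = 0) \<and> (\<Sum>i\<in>Basis. \<alpha> i) \<le> m}"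

definition poly_le :: "nat \<Rightarrow> ('a::euclidean_space \<Rightarrow> real) \<Rightarrow> bool" where
  "poly_le m P \<longleftrightarrow> (\<exists>c. \<forall>x. P x = (\<Sum>\<alpha>\<in>multi_idx m. c \<alpha> * (\<Prod>i\<in>Basis. (x \<bullet> i) ^ \<alpha> i)))"

definition Sh :: "'a::euclidean_space set \<Rightarrow> 'a set set \<Rightarrow> nat \<Rightarrow> ('a \<Rightarrow> real) \<Rightarrow> bool" where
  "Sh \<Omega> T m \<phi> \<longleftrightarrow> continuous_on \<Omega> \<phi> \<and>
     (\<forall>e\<in>T. \<exists>P. poly_le m P \<and> (\<forall>x\<in>e \<inter> \<Omega>. \<phi> x = P x))"

definition Uh :: "'a::euclidean_space set \<Rightarrow> ('a \<Rightarrow> real) \<Rightarrow> 'a set set \<Rightarrow> nat \<Rightarrow> ('a \<Rightarrow> 'a) \<Rightarrow> bool" where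
  "Uh \<Omega> lam T l v \<longleftrightarrow> (\<forall>i\<in>Basis. Sh \<Omega> T l (\<lambda>x. v x \<bullet> i)) \<and> Uspace \<Omega> lam v"

definition Ph :: "'a::euclidean_space set \<Rightarrow> 'a set set \<Rightarrow> nat \<Rightarrow> ('a \<Rightarrow> real) \<Rightarrow> bool" where
  "Ph \<Omega> T k q \<longleftrightarrow> Sh \<Omega> T k q \<and> Pspace \<Omega> q"

end

theory Submission
  imports Defs
begin

definition H0 :: "real \<Rightarrow> real" where "H0 u = (max 0 u)^2"

lemma H0_deriv: "(H0 has_real_derivative 2 * max 0 u) (at u)"
proof -
  consider "u > 0" | "u < 0" | "u = 0" by linarith
  then show ?thesis
  proof cases
    case 1
    have "((\<lambda>v. v^2) has_real_derivative 2 * u) (at u)"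
      by (auto intro!: derivative_eq_intros)
    moreover have "\<forall>\<^sub>F v in nhds u. v^2 = H0 v"
      using eventually_nhds_in_open[of "{0<..}" u] 1
      by (auto elim!: eventually_mono simp: H0_def)
    ultimately show ?thesis using 1
      using DERIV_cong_ev[of u u "\<lambda>v. v^2" H0 "2*u" "2 * max 0 u"] by simp
  next
    case 2
    have "((\<lambda>v. 0) has_real_derivative 0) (at u)" by simp
    moreover have "\<forall>\<^sub>F v in nhds u. 0 = H0 v"
      using eventually_nhds_in_open[of "{..<0}" u] 2
      by (auto elim!: eventually_mono simp: H0_def)
    ultimately show ?thesis using 2
      using DERIV_cong_ev[of u u "\<lambda>v. 0" H0 0 "2 * max 0 u"] by simp
  next
    case 3
    have b: "norm ((H0 (0 + h) - H0 0) / h) \<le> norm h" for h :: real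
      by (cases "h > 0") (simp_all add: H0_def power2_eq_square)
    have "((\<lambda>h. (H0 (0 + h) - H0 0) / h) \<longlongrightarrow> 0) (at 0)"
      apply (rule Lim_null_comparison[where g = "\<lambda>h. norm h"])
      using b apply (simp add: always_eventually)
      by (rule tendsto_norm_zero[OF tendsto_ident_at])
    then show ?thesis using 3 by (simp add: DERIV_def)
  qed
qed

lemma H0_chain[derivative_intros]:
  "(f has_real_derivative f') (at x within s) \<Longrightarrow>
   ((\<lambda>x. H0 (f x)) has_real_derivative 2 * max 0 (f x) * f') (at x within s)"
  using DERIV_chain2[OF H0_deriv] by blast

definition cK :: "real \<Rightarrow> real \<Rightarrow> real" where "cK c d = 4 / (d - c)^2"

definition bmp :: "real \<Rightarrow> real \<Rightarrow> real \<Rightarrow> real" where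
  "bmp c d t = H0 ((t - c) * (d - t) * cK c d)"
definition bmp' :: "real \<Rightarrow> real \<Rightarrow> real \<Rightarrow> real" where
  "bmp' c d t = 2 * max 0 ((t - c) * (d - t) * cK c d) * ((c + d - 2*t) * cK c d)"
definition rho :: "nat \<Rightarrow> real \<Rightarrow> real \<Rightarrow> real \<Rightarrow> real" where
  "rho n c d t = 1 - (1 - bmp c d t)^n"
definition rho' :: "nat \<Rightarrow> real \<Rightarrow> real \<Rightarrow> real \<Rightarrow> real" where
  "rho' n c d t = - (real n * (1 - bmp c d t)^(n - 1) * (- bmp' c d t))"

lemma bmp_deriv: "(bmp c d has_real_derivative bmp' c d t) (at t)"
proof -
  have "((\<lambda>t. (t - c) * (d - t) * cK c d) has_real_derivative ((c + d - 2*t) * cK c d)) (at t)"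
    by (auto intro!: derivative_eq_intros simp: algebra_simps)
  from H0_chain[OF this] show ?thesis unfolding bmp_def[abs_def] bmp'_def by simp
qed

lemma rho_deriv: "(rho n c d has_real_derivative rho' n c d t) (at t)"
proof -
  have a: "((\<lambda>t. 1 - bmp c d t) has_real_derivative (- bmp' c d t)) (at t)"
    using DERIV_diff[OF DERIV_const bmp_deriv, of 1 c d t] by simp
  have "((\<lambda>t. (1 - bmp c d t)^n) has_real_derivative real n * (1 - bmp c d t)^(n - 1) * (- bmp' c d t)) (at t)"
    using DERIV_power[OF a, of n] by (simp add: mult_ac)
  from DERIV_diff[OF DERIV_const this, of 1] show ?thesis
    unfolding rho_def[abs_def] rho'_def by simp
qed

lemma H0_cont: "continuous_on UNIV H0"
  unfolding H0_def[abs_def] by (intro continuous_intros)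

lemma bmp_cont: "continuous_on UNIV (bmp c d)"
  unfolding bmp_def[abs_def]
  by (intro continuous_on_compose2[OF H0_cont] continuous_intros) auto

lemma bmp'_cont: "continuous_on UNIV (bmp' c d)"
  unfolding bmp'_def[abs_def] by (intro continuous_intros)

lemma rho'_cont: "continuous_on UNIV (rho' n c d)"
  unfolding rho'_def[abs_def] by (intro continuous_intros bmp_cont bmp'_cont)

lemma rho_cont: "continuous_on UNIV (rho n c d)"
  unfolding rho_def[abs_def] by (intro continuous_intros bmp_cont)

lemma bmp_bounds: assumes "c < d" shows "0 \<le> bmp c d t" "bmp c d t \<le> 1"
proof -
  have K: "cK c d > 0" using assms by (simp add: cK_def)
  have "4 * ((t - c) * (d - t)) \<le> (d - c)^2"
  proof -
    have "(d - c)^2 - 4 * ((t - c) * (d - t)) = (2*t - c - d)^2"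
      by (simp add: power2_eq_square algebra_simps)
    then show ?thesis by (metis diff_ge_0_iff_ge zero_le_power2)
  qed
  then have q: "(t - c) * (d - t) * cK c d \<le> 1" using assms
    by (simp add: cK_def field_simps)
  show "0 \<le> bmp c d t" by (simp add: bmp_def H0_def)
  have "max 0 ((t - c) * (d - t) * cK c d) \<le> 1" using q by simp
  then show "bmp c d t \<le> 1" unfolding bmp_def H0_def
    by (simp add: power_le_one)
qed

lemma bmp_pos: assumes "c < t" "t < d" shows "0 < bmp c d t"
  using assms by (simp add: bmp_def H0_def cK_def)

lemma bmp_zero: assumes "\<not> (c < t \<and> t < d)" "c < d" shows "bmp c d t = 0"
proof -
  have "(t - c) * (d - t) \<le> 0" using assms
  proof (cases "t \<le> c")
    case True
    then show ?thesis using assms by (intro mult_nonpos_nonneg) auto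
  next
    case False
    then show ?thesis using assms by (intro mult_nonneg_nonpos) auto
  qed
  moreover have "cK c d \<ge> 0" by (simp add: cK_def)
  ultimately have "(t - c) * (d - t) * cK c d \<le> 0" by (simp add: mult_nonpos_nonneg)
  then show ?thesis by (simp add: bmp_def H0_def)
qed

lemma rho_bounds: assumes "c < d" shows "0 \<le> rho n c d t" "rho n c d t \<le> 1"
  using bmp_bounds[OF assms, of t] unfolding rho_def
  by (auto simp: power_le_one)

lemma rho_zero: "\<not> (c < t \<and> t < d) \<Longrightarrow> c < d \<Longrightarrow> rho n c d t = 0"
  by (simp add: rho_def bmp_zero)

lemma rho_lim: assumes "c < t" "t < d" shows "(\<lambda>n. rho n c d t) \<longlonglongrightarrow> 1"
proof -
  have "0 < bmp c d t" "bmp c d t \<le> 1" using bmp_pos[OF assms] bmp_bounds[of c d t] assms by auto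
  then have "norm (1 - bmp c d t) < 1" by (simp add: abs_if)
  then have "(\<lambda>n. (1 - bmp c d t)^n) \<longlonglongrightarrow> 0" by (rule LIMSEQ_power_zero)
  then have "(\<lambda>n. 1 - (1 - bmp c d t)^n) \<longlonglongrightarrow> 1 - 0" by (rule tendsto_diff[OF tendsto_const])
  then show ?thesis by (simp add: rho_def)
qed

definition tfn :: "nat \<Rightarrow> 'a \<Rightarrow> 'a \<Rightarrow> 'a::euclidean_space \<Rightarrow> real" where
  "tfn n c d x = (\<Prod>i\<in>Basis. rho n (c\<bullet>i) (d\<bullet>i) (x\<bullet>i))"

definition tfn' :: "nat \<Rightarrow> 'a \<Rightarrow> 'a \<Rightarrow> 'a::euclidean_space \<Rightarrow> 'a \<Rightarrow> real" where
  "tfn' n c d x h = (\<Sum>i\<in>Basis. (rho' n (c\<bullet>i) (d\<bullet>i) (x\<bullet>i) * (h\<bullet>i)) *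
       (\<Prod>j\<in>Basis - {i}. rho n (c\<bullet>j) (d\<bullet>j) (x\<bullet>j)))"

lemma comp_deriv:
  fixes i :: "'a::euclidean_space"
  shows "((\<lambda>x. rho n a b (x\<bullet>i)) has_derivative (\<lambda>h. rho' n a b (x\<bullet>i) * (h\<bullet>i))) (at x)"
proof -
  have 1: "((\<lambda>x. x\<bullet>i) has_derivative (\<lambda>h. h\<bullet>i)) (at x)"
    by (auto intro!: derivative_eq_intros)
  have 2: "(rho n a b has_derivative (\<lambda>h. rho' n a b (x\<bullet>i) * h)) (at (x\<bullet>i))"
    using rho_deriv[of n a b "x\<bullet>i"] by (simp add: has_field_derivative_def)
  show ?thesis using has_derivative_compose[OF 1 2] by simp
qed

lemma tfn_deriv: "(tfn n c d has_derivative tfn' n c d x) (at x)"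
proof -
  have "((\<lambda>x. \<Prod>i\<in>Basis. rho n (c\<bullet>i) (d\<bullet>i) (x\<bullet>i)) has_derivative
     (\<lambda>h. \<Sum>i\<in>Basis. (rho' n (c\<bullet>i) (d\<bullet>i) (x\<bullet>i) * (h\<bullet>i)) *
       (\<Prod>j\<in>Basis - {i}. rho n (c\<bullet>j) (d\<bullet>j) (x\<bullet>j)))) (at x)"
    by (rule has_derivative_prod) (rule comp_deriv)
  then show ?thesis unfolding tfn_def[abs_def] tfn'_def[abs_def] .
qed

lemma pd_tfn: "pd (tfn n c d) x j = tfn' n c d x j"
  unfolding pd_def using frechet_derivative_at[OF tfn_deriv] by metis

lemma tfn_pd_cont: "continuous_on UNIV (\<lambda>x. pd (tfn n c d) x j)"
proof -
  have rc: "continuous_on UNIV (\<lambda>x. rho n a b (x\<bullet>i))" for a b and i :: 'a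
    by (intro continuous_on_compose2[OF rho_cont] continuous_intros) auto
  have rc': "continuous_on UNIV (\<lambda>x. rho' n a b (x\<bullet>i))" for a b and i :: 'a
    by (intro continuous_on_compose2[OF rho'_cont] continuous_intros) auto
  show ?thesis unfolding pd_tfn tfn'_def
    by (intro continuous_on_sum continuous_on_mult continuous_on_prod continuous_on_const rc rc')
qed

lemma tfn_cont: "continuous_on UNIV (tfn n c d)"
proof -
  have rc: "continuous_on UNIV (\<lambda>x. rho n a b (x\<bullet>i))" for a b and i :: 'a
    by (intro continuous_on_compose2[OF rho_cont] continuous_intros) auto
  show ?thesis unfolding tfn_def[abs_def] by (intro continuous_on_prod rc)
qed

lemma tfn_zero:
  assumes "\<forall>i\<in>Basis. c\<bullet>i < d\<bullet>i" "x \<notin> box c d"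
  shows "tfn n c d x = 0"
proof -
  obtain i where i: "i \<in> Basis" "\<not> (c\<bullet>i < x\<bullet>i \<and> x\<bullet>i < d\<bullet>i)"
    using assms(2) by (auto simp: mem_box)
  then have "rho n (c\<bullet>i) (d\<bullet>i) (x\<bullet>i) = 0" using assms(1) by (intro rho_zero) auto
  then show ?thesis unfolding tfn_def using i(1) by (intro prod_zero) auto
qed

lemma tfn_bounds:
  assumes "\<forall>i\<in>Basis. c\<bullet>i < d\<bullet>i"
  shows "0 \<le> tfn n c d x" "tfn n c d x \<le> 1"
proof -
  have "0 \<le> rho n (c\<bullet>i) (d\<bullet>i) (x\<bullet>i) \<and> rho n (c\<bullet>i) (d\<bullet>i) (x\<bullet>i) \<le> 1" if "i \<in> Basis" for i
    using rho_bounds[of "c\<bullet>i" "d\<bullet>i"] assms that by blast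
  then show "0 \<le> tfn n c d x" "tfn n c d x \<le> 1" unfolding tfn_def
    by (simp_all add: prod_nonneg prod_le_1)
qed

lemma tfn_lim:
  assumes "\<forall>i\<in>Basis. c\<bullet>i < d\<bullet>i"
  shows "(\<lambda>n. tfn n c d x) \<longlonglongrightarrow> indicator (box c d) x"
proof (cases "x \<in> box c d")
  case True
  have "(\<lambda>n. \<Prod>i\<in>Basis. rho n (c\<bullet>i) (d\<bullet>i) (x\<bullet>i)) \<longlonglongrightarrow> (\<Prod>i\<in>(Basis::'a set). 1)"
    using True by (intro tendsto_prod rho_lim) (auto simp: mem_box)
  then show ?thesis using True by (simp add: tfn_def[abs_def])
next
  case False
  then show ?thesis using tfn_zero[OF assms False] by simp
qed

lemma tfn_test:
  assumes "\<forall>i\<in>Basis. c\<bullet>i < d\<bullet>i" "cbox c d \<subseteq> \<Omega>"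
  shows "test_fun \<Omega> (tfn n c d)"
  unfolding test_fun_def
proof (intro conjI allI ballI)
  show "tfn n c d differentiable at x" for x
    using tfn_deriv differentiable_def by blast
  show "continuous_on UNIV (\<lambda>x. pd (tfn n c d) x i)" for i by (rule tfn_pd_cont)
  show "\<exists>K. compact K \<and> K \<subseteq> \<Omega> \<and> (\<forall>x. x \<notin> K \<longrightarrow> tfn n c d x = 0)"
  proof (intro exI[of _ "cbox c d"] conjI allI impI)
    show "compact (cbox c d)" by simp
    show "cbox c d \<subseteq> \<Omega>" by fact
    fix x assume "x \<notin> cbox c d"
    then have "x \<notin> box c d" using box_subset_cbox by blast
    then show "tfn n c d x = 0" by (rule tfn_zero[OF assms(1)])
  qed
qed

lemma open_sets_lebesgue: "open S \<Longrightarrow> S \<in> sets lebesgue"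
  by (metis borel_open sets_completionI_sets sets_lborel)

lemma borel_ind_meas:
  assumes "B \<in> sets borel"
  shows "(indicator B :: _ \<Rightarrow> real) \<in> borel_measurable (lebesgue_on \<Omega>)"
proof -
  have "(indicator B :: _ \<Rightarrow> real) \<in> borel_measurable lborel"
    using assms by (simp add: borel_measurable_indicator)
  then have "(indicator B :: _ \<Rightarrow> real) \<in> borel_measurable lebesgue"
    by (rule measurable_completion)
  then show ?thesis by (rule measurable_restrict_space1)
qed

lemma ind_mult_integrable:
  fixes g :: "'a::euclidean_space \<Rightarrow> real"
  assumes "integrable M g" "(indicator B :: _ \<Rightarrow> real) \<in> borel_measurable M"
  shows "integrable M (\<lambda>x. indicator B x * g x)"
proof (rule Bochner_Integration.integrable_bound[OF integrable_norm[OF assms(1)]])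
  show "(\<lambda>x. indicator B x * g x) \<in> borel_measurable M"
    by (rule borel_measurable_times[OF assms(2) borel_measurable_integrable[OF assms(1)]])
  show "AE x in M. norm (indicator B x * g x) \<le> norm (norm (g x))"
    by (auto simp: indicator_def)
qed

lemma box_int_zero:
  fixes g :: "'a::euclidean_space \<Rightarrow> real"
  assumes "open \<Omega>" and g: "integrable (lebesgue_on \<Omega>) g"
    and tst: "\<forall>\<phi>. test_fun \<Omega> \<phi> \<longrightarrow> integral\<^sup>L (lebesgue_on \<Omega>) (\<lambda>x. g x * \<phi> x) = 0"
    and cb: "cbox c d \<subseteq> \<Omega>"
  shows "integral\<^sup>L (lebesgue_on \<Omega>) (\<lambda>x. indicator (box c d) x * g x) = 0"
proof (cases "\<forall>i\<in>Basis. c\<bullet>i < d\<bullet>i")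
  case False
  then have "box c d = {}" using box_ne_empty(2) by blast
  then show ?thesis by simp
next
  case True
  have Om: "\<Omega> \<in> sets lebesgue" using assms(1) by (rule open_sets_lebesgue)
  have tm: "tfn n c d \<in> borel_measurable (lebesgue_on \<Omega>)" for n
    using continuous_imp_measurable_on_sets_lebesgue[OF continuous_on_subset[OF tfn_cont] Om] by blast
  have gm: "g \<in> borel_measurable (lebesgue_on \<Omega>)" using g by (rule borel_measurable_integrable)
  have bm: "(indicator (box c d) :: _ \<Rightarrow> real) \<in> borel_measurable (lebesgue_on \<Omega>)"
    by (rule borel_ind_meas) simp
  have lim: "(\<lambda>n. integral\<^sup>L (lebesgue_on \<Omega>) (\<lambda>x. g x * tfn n c d x)) \<longlonglongrightarrow>
      integral\<^sup>L (lebesgue_on \<Omega>) (\<lambda>x. indicator (box c d) x * g x)"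
  proof (rule integral_dominated_convergence[where w = "\<lambda>x. norm (g x)"])
    show "(\<lambda>x. indicator (box c d) x * g x) \<in> borel_measurable (lebesgue_on \<Omega>)"
      using bm gm by (rule borel_measurable_times)
    show "(\<lambda>x. g x * tfn n c d x) \<in> borel_measurable (lebesgue_on \<Omega>)" for n
      using gm tm by (rule borel_measurable_times)
    show "integrable (lebesgue_on \<Omega>) (\<lambda>x. norm (g x))" using g by (rule integrable_norm)
    show "AE x in lebesgue_on \<Omega>. (\<lambda>n. g x * tfn n c d x) \<longlonglongrightarrow> indicator (box c d) x * g x"
    proof (rule AE_I2)
      fix x
      have "(\<lambda>n. g x * tfn n c d x) \<longlonglongrightarrow> g x * indicator (box c d) x"
        by (rule tendsto_mult[OF tendsto_const tfn_lim[OF True]])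
      then show "(\<lambda>n. g x * tfn n c d x) \<longlonglongrightarrow> indicator (box c d) x * g x"
        by (simp add: mult.commute)
    qed
    show "AE x in lebesgue_on \<Omega>. norm (g x * tfn n c d x) \<le> norm (g x)" for n
    proof (rule AE_I2)
      fix x
      have "0 \<le> tfn n c d x" "tfn n c d x \<le> 1" using tfn_bounds[OF True] by auto
      then have "\<bar>g x\<bar> * tfn n c d x \<le> \<bar>g x\<bar>" by (intro mult_left_le) auto
      then show "norm (g x * tfn n c d x) \<le> norm (g x)"
        using \<open>0 \<le> tfn n c d x\<close> by (simp add: abs_mult)
    qed
  qed
  moreover have "integral\<^sup>L (lebesgue_on \<Omega>) (\<lambda>x. g x * tfn n c d x) = 0" for n
    using tst tfn_test[OF True cb] by blast
  ultimately have "(\<lambda>n. 0::real) \<longlonglongrightarrow> integral\<^sup>L (lebesgue_on \<Omega>) (\<lambda>x. indicator (box c d) x * g x)"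
    by simp
  then show ?thesis by (simp add: LIMSEQ_const_iff)
qed

lemma box_Int:
  fixes a b c d :: "'a::euclidean_space"
  shows "box c d \<inter> box a b = box (\<Sum>i\<in>Basis. max (c\<bullet>i) (a\<bullet>i) *\<^sub>R i) (\<Sum>i\<in>Basis. min (d\<bullet>i) (b\<bullet>i) *\<^sub>R i)"
  unfolding set_eq_iff Int_iff mem_box by auto

lemma borel_sets_lebesgue: "A \<in> sets borel \<Longrightarrow> A \<in> sets lebesgue"
  by (metis sets_completionI_sets sets_lborel)

lemma borel_set_int_zero:
  fixes g :: "'a::euclidean_space \<Rightarrow> real"
  assumes "open \<Omega>" and g: "integrable (lebesgue_on \<Omega>) g"
    and tst: "\<forall>\<phi>. test_fun \<Omega> \<phi> \<longrightarrow> integral\<^sup>L (lebesgue_on \<Omega>) (\<lambda>x. g x * \<phi> x) = 0"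
    and cb: "cbox a b \<subseteq> \<Omega>" and A: "A \<in> sets borel"
  shows "integral\<^sup>L (lebesgue_on \<Omega>) (\<lambda>x. indicator (A \<inter> box a b) x * g x) = 0"
proof -
  define G where "G = range (\<lambda>(c, d). box c d :: 'a set)"
  have sb: "sets (borel :: 'a measure) = sigma_sets UNIV G"
    unfolding G_def by (subst borel_eq_box) (rule sets_measure_of, simp)
  have A': "A \<in> sigma_sets UNIV G" using A sb by simp
  have ist: "Int_stable G"
    unfolding Int_stable_def G_def
  proof (intro ballI)
    fix X Y assume "X \<in> range (\<lambda>(c, d). box c d :: 'a set)" "Y \<in> range (\<lambda>(c, d). box c d :: 'a set)"
    then obtain c d c' d' where "X = box c d" "Y = box c' d'" by auto
    then have "X \<inter> Y = (\<lambda>(c, d). box c d) ((\<Sum>i\<in>Basis. max (c\<bullet>i) (c'\<bullet>i) *\<^sub>R i), (\<Sum>i\<in>Basis. min (d\<bullet>i) (d'\<bullet>i) *\<^sub>R i))"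
      by (simp add: box_Int)
    then show "X \<inter> Y \<in> range (\<lambda>(c, d). box c d :: 'a set)" by (rule range_eqI)
  qed
  have Om: "\<Omega> \<in> sets lebesgue" using assms(1) by (rule open_sets_lebesgue)
  have Qsub: "box a b \<subseteq> \<Omega>" using cb box_subset_cbox by blast
  have intb: "integrable (lebesgue_on \<Omega>) (\<lambda>x. indicator B x * g x)" if "B \<in> sets borel" for B
    using ind_mult_integrable[OF g borel_ind_meas[OF that]] .
  have cl: "G \<subseteq> Pow UNIV" by simp
  from ist cl A' show ?thesis
  proof (induction A rule: sigma_sets_induct_disjoint)
    case (basic A)
    then obtain c d where Ad: "A = box c d" unfolding G_def by auto
    define c' where "c' = (\<Sum>i\<in>Basis. max (c\<bullet>i) (a\<bullet>i) *\<^sub>R i)"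
    define d' where "d' = (\<Sum>i\<in>Basis. min (d\<bullet>i) (b\<bullet>i) *\<^sub>R i)"
    have eq: "A \<inter> box a b = box c' d'" unfolding Ad c'_def d'_def by (rule box_Int)
    show ?case
    proof (cases "box c' d' = {}")
      case True then show ?thesis using eq by simp
    next
      case False
      then have lt: "\<forall>i\<in>Basis. c'\<bullet>i < d'\<bullet>i" using box_ne_empty(2) by blast
      have "cbox c' d' \<subseteq> cbox a b"
        using lt unfolding subset_box(1) c'_def d'_def by auto
      then have "cbox c' d' \<subseteq> \<Omega>" using cb by blast
      then show ?thesis using eq box_int_zero[OF assms(1) g tst] by simp
    qed
  next
    case empty
    then show ?case by simp
  next
    case (compl A)
    have Ab: "A \<in> sets borel" using compl(1) sb by simp
    have "(\<lambda>x. indicator ((UNIV - A) \<inter> box a b) x * g x)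
        = (\<lambda>x. indicator (box a b) x * g x - indicator (A \<inter> box a b) x * g x)"
      by (auto simp: indicator_def fun_eq_iff)
    moreover have "integral\<^sup>L (lebesgue_on \<Omega>) (\<lambda>x. indicator (box a b) x * g x - indicator (A \<inter> box a b) x * g x)
       = integral\<^sup>L (lebesgue_on \<Omega>) (\<lambda>x. indicator (box a b) x * g x) - integral\<^sup>L (lebesgue_on \<Omega>) (\<lambda>x. indicator (A \<inter> box a b) x * g x)"
      by (rule Bochner_Integration.integral_diff[OF intb intb]) (use Ab in auto)
    moreover have "integral\<^sup>L (lebesgue_on \<Omega>) (\<lambda>x. indicator (box a b) x * g x) = 0"
      using box_int_zero[OF assms(1) g tst cb] .
    ultimately show ?case using compl(2) by simp
  next
    case (union A)
    have Ab: "A i \<in> sets borel" for i using union(2) sb by auto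
    define B where "B i = A i \<inter> box a b" for i
    have Bs: "B i \<in> sets (lebesgue_on \<Omega>)" for i
      unfolding B_def using Om Qsub Ab[of i] borel_sets_lebesgue
      by (subst sets_restrict_space_iff) auto
    have Bd: "B i \<inter> B j = {}" if "i \<noteq> j" for i j
      using union(1) that unfolding disjoint_family_on_def B_def by auto
    have UB: "(\<Union>i. A i) \<inter> box a b = (\<Union>i. B i)" unfolding B_def by auto
    have UBb: "(\<Union>i. B i) \<in> sets borel" unfolding B_def using Ab by auto
    have si: "set_integrable (lebesgue_on \<Omega>) (\<Union>i. B i) g"
      unfolding set_integrable_def using intb[OF UBb] by simp
    have "(LINT x:(\<Union>i. B i)|lebesgue_on \<Omega>. g x) = (\<Sum>i. (LINT x:(B i)|lebesgue_on \<Omega>. g x))"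
      by (rule lebesgue_integral_countable_add[OF Bs Bd si])
    moreover have "(LINT x:(B i)|lebesgue_on \<Omega>. g x) = 0" for i
      using union(3)[of i] unfolding B_def set_lebesgue_integral_def by simp
    ultimately have "(LINT x:(\<Union>i. B i)|lebesgue_on \<Omega>. g x) = 0" by simp
    then show ?case unfolding UB set_lebesgue_integral_def by simp
  qed
qed

lemma box_AE_le:
  fixes g :: "'a::euclidean_space \<Rightarrow> real"
  assumes "open \<Omega>" and g: "integrable (lebesgue_on \<Omega>) g"
    and tst: "\<forall>\<phi>. test_fun \<Omega> \<phi> \<longrightarrow> integral\<^sup>L (lebesgue_on \<Omega>) (\<lambda>x. g x * \<phi> x) = 0"
    and cb: "cbox a b \<subseteq> \<Omega>"
  shows "AE x in lebesgue_on \<Omega>. x \<in> box a b \<longrightarrow> g x \<le> 0"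
proof -
  have Om: "\<Omega> \<in> sets lebesgue" using assms(1) by (rule open_sets_lebesgue)
  have Om': "\<Omega> \<inter> space lebesgue \<in> sets lebesgue" using Om by simp
  have gm: "g \<in> borel_measurable (lebesgue_on \<Omega>)" using g by (rule borel_measurable_integrable)
  define E where "E = {x \<in> \<Omega>. 0 < g x}"
  have "E \<in> sets (lebesgue_on \<Omega>)"
    using gm unfolding borel_measurable_iff_greater E_def by (metis space_lebesgue_on)
  then have E: "E \<in> sets lebesgue" "E \<subseteq> \<Omega>"
    using sets_restrict_space_iff[OF Om'] by auto
  obtain S N N' where SN: "E = S \<union> N" "N \<subseteq> N'" "N' \<in> null_sets lborel" "S \<in> sets lborel"
    using sets_completionE[OF E(1)] by metis
  have Sb: "S \<in> sets borel" using SN(4) by simp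
  have z: "integral\<^sup>L (lebesgue_on \<Omega>) (\<lambda>x. indicator (S \<inter> box a b) x * g x) = 0"
    by (rule borel_set_int_zero[OF assms(1) g tst cb Sb])
  have N'l: "N' \<in> null_sets lebesgue" using SN(3) by (rule null_sets_completionI)
  have aeN: "AE x in lebesgue_on \<Omega>. x \<notin> N'"
    using AE_not_in[OF N'l] by (subst AE_restrict_space_iff[OF Om']) (auto elim: eventually_mono)
  have meE: "(indicator (E \<inter> box a b) :: _ \<Rightarrow> real) \<in> borel_measurable (lebesgue_on \<Omega>)"
  proof -
    have "E \<inter> box a b \<in> sets (lebesgue_on \<Omega>)"
    proof (intro sets.Int)
      show "E \<in> sets (lebesgue_on \<Omega>)" by fact
      have "box a b \<subseteq> \<Omega>" using cb box_subset_cbox by blast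
      moreover have "box a b \<in> sets lebesgue" by (rule borel_sets_lebesgue) simp
      ultimately show "box a b \<in> sets (lebesgue_on \<Omega>)" using sets_restrict_space_iff[OF Om'] by simp
    qed
    then show ?thesis by simp
  qed
  have intE: "integrable (lebesgue_on \<Omega>) (\<lambda>x. indicator (E \<inter> box a b) x * g x)"
    by (rule ind_mult_integrable[OF g meE])
  have intS: "integrable (lebesgue_on \<Omega>) (\<lambda>x. indicator (S \<inter> box a b) x * g x)"
    by (rule ind_mult_integrable[OF g borel_ind_meas]) (use Sb in simp)
  have "integral\<^sup>L (lebesgue_on \<Omega>) (\<lambda>x. indicator (E \<inter> box a b) x * g x)
      = integral\<^sup>L (lebesgue_on \<Omega>) (\<lambda>x. indicator (S \<inter> box a b) x * g x)"
  proof (rule integral_cong_AE)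
    show "(\<lambda>x. indicator (E \<inter> box a b) x * g x) \<in> borel_measurable (lebesgue_on \<Omega>)"
      using intE by (rule borel_measurable_integrable)
    show "(\<lambda>x. indicator (S \<inter> box a b) x * g x) \<in> borel_measurable (lebesgue_on \<Omega>)"
      using intS by (rule borel_measurable_integrable)
    show "AE x in lebesgue_on \<Omega>. indicator (E \<inter> box a b) x * g x = indicator (S \<inter> box a b) x * g x"
      using aeN
    proof (rule eventually_mono)
      fix x assume "x \<notin> N'"
      then have "x \<in> E \<longleftrightarrow> x \<in> S" using SN(1,2) by blast
      then show "indicator (E \<inter> box a b) x * g x = indicator (S \<inter> box a b) x * g x"
        by (simp add: indicator_def)
    qed
  qed
  then have z2: "integral\<^sup>L (lebesgue_on \<Omega>) (\<lambda>x. indicator (E \<inter> box a b) x * g x) = 0" using z by simp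
  have nn: "AE x in lebesgue_on \<Omega>. 0 \<le> indicator (E \<inter> box a b) x * g x"
    by (rule AE_I2) (auto simp: indicator_def E_def)
  have "AE x in lebesgue_on \<Omega>. indicator (E \<inter> box a b) x * g x = 0"
    using integral_nonneg_eq_0_iff_AE[OF intE nn] z2 by simp
  then show ?thesis
  proof (rule AE_mp[OF _ AE_I2[OF impI]])
    fix x assume x: "x \<in> space (lebesgue_on \<Omega>)" "indicator (E \<inter> box a b) x * g x = 0"
    show "x \<in> box a b \<longrightarrow> g x \<le> 0"
    proof
      assume xb: "x \<in> box a b"
      show "g x \<le> 0"
      proof (rule ccontr)
        assume "\<not> g x \<le> 0"
        then have "x \<in> E" using x(1) by (simp add: E_def)
        then show False using x(2) xb \<open>\<not> g x \<le> 0\<close> by (simp add: indicator_def)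
      qed
    qed
  qed
qed

lemma FL:
  fixes g :: "'a::euclidean_space \<Rightarrow> real"
  assumes op: "open \<Omega>" and g: "integrable (lebesgue_on \<Omega>) g"
    and tst: "\<forall>\<phi>. test_fun \<Omega> \<phi> \<longrightarrow> integral\<^sup>L (lebesgue_on \<Omega>) (\<lambda>x. g x * \<phi> x) = 0"
  shows "AE x in lebesgue_on \<Omega>. g x = 0"
proof -
  have g': "integrable (lebesgue_on \<Omega>) (\<lambda>x. - g x)" using g by (rule integrable_minus)
  have tst': "\<forall>\<phi>. test_fun \<Omega> \<phi> \<longrightarrow> integral\<^sup>L (lebesgue_on \<Omega>) (\<lambda>x. - g x * \<phi> x) = 0"
    using tst by simp
  have loc: "AE x in lebesgue_on \<Omega>. x \<in> box a b \<longrightarrow> g x = 0" if cb: "cbox a b \<subseteq> \<Omega>" for a b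
  proof -
    have 1: "AE x in lebesgue_on \<Omega>. x \<in> box a b \<longrightarrow> g x \<le> 0"
      by (rule box_AE_le[OF op g tst cb])
    have 2: "AE x in lebesgue_on \<Omega>. x \<in> box a b \<longrightarrow> - g x \<le> 0"
      by (rule box_AE_le[OF op g' tst' cb])
    from 1 2 show ?thesis by eventually_elim auto
  qed
  define F where "F = {box a b | a b. cbox a b \<subseteq> \<Omega>}"
  have Fo: "\<And>S. S \<in> F \<Longrightarrow> open S" unfolding F_def by auto
  obtain F' where F': "F' \<subseteq> F" "countable F'" "\<Union>F' = \<Union>F"
    using Lindelof[OF Fo] by metis
  have UF: "\<Union>F = \<Omega>"
  proof
    show "\<Union>F \<subseteq> \<Omega>" unfolding F_def using box_subset_cbox by blast
    show "\<Omega> \<subseteq> \<Union>F"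
    proof
      fix x assume "x \<in> \<Omega>"
      then obtain a b where "cbox a b \<subseteq> \<Omega>" "x \<in> box a b"
        using open_contains_cbox[OF op] by metis
      then show "x \<in> \<Union>F" unfolding F_def by blast
    qed
  qed
  have "AE x in lebesgue_on \<Omega>. \<forall>Q\<in>F'. x \<in> Q \<longrightarrow> g x = 0"
  proof (rule AE_ball_countable'[OF _ F'(2)])
    fix Q assume "Q \<in> F'"
    then obtain a b where "Q = box a b" "cbox a b \<subseteq> \<Omega>" using F'(1) unfolding F_def by blast
    then show "AE x in lebesgue_on \<Omega>. x \<in> Q \<longrightarrow> g x = 0" using loc by simp
  qed
  then show ?thesis
  proof (rule AE_mp[OF _ AE_I2[OF impI]])
    fix x assume x: "x \<in> space (lebesgue_on \<Omega>)" "\<forall>Q\<in>F'. x \<in> Q \<longrightarrow> g x = 0"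
    then have "x \<in> \<Union>F'" using F'(3) UF by simp
    then show "g x = 0" using x(2) by blast
  qed
qed

lemma fin_meas:
  assumes "bounded \<Omega>" "open (\<Omega>::'a::euclidean_space set)"
  shows "finite_measure (lebesgue_on \<Omega>)"
proof (rule finite_measureI)
  have Om: "\<Omega> \<in> sets lebesgue" using assms(2) by (rule open_sets_lebesgue)
  have "\<Omega> \<in> lmeasurable" using bounded_set_imp_lmeasurable[OF assms(1) Om] .
  then have lt: "emeasure lebesgue \<Omega> < \<infinity>" unfolding fmeasurable_def by blast
  have eq: "emeasure (lebesgue_on \<Omega>) \<Omega> = emeasure lebesgue \<Omega>"
    by (rule emeasure_restrict_space) (use Om in auto)
  from lt eq have "emeasure (lebesgue_on \<Omega>) \<Omega> < \<infinity>" by (simp only:)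
  then show "emeasure (lebesgue_on \<Omega>) (space (lebesgue_on \<Omega>)) \<noteq> \<infinity>"
    by (metis space_lebesgue_on less_irrefl)
qed

lemma int_const:
  assumes "bounded \<Omega>" "open (\<Omega>::'a::euclidean_space set)"
  shows "integrable (lebesgue_on \<Omega>) (\<lambda>x. c::real)"
  using finite_measure.integrable_const[OF fin_meas[OF assms]] .

lemma L2_meas: "L2 \<Omega> f \<Longrightarrow> f \<in> borel_measurable (lebesgue_on \<Omega>)"
  by (simp add: L2_def)

lemma L2_sq: "L2 \<Omega> f \<Longrightarrow> integrable (lebesgue_on \<Omega>) (\<lambda>x. (f x)\<^sup>2)"
  by (simp add: L2_def)

lemma L2_mult:
  assumes "L2 \<Omega> f" "L2 \<Omega> g"
  shows "integrable (lebesgue_on \<Omega>) (\<lambda>x. f x * g x)"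
proof (rule Bochner_Integration.integrable_bound)
  show "integrable (lebesgue_on \<Omega>) (\<lambda>x. (f x)\<^sup>2 + (g x)\<^sup>2)"
    using L2_sq[OF assms(1)] L2_sq[OF assms(2)] by (rule Bochner_Integration.integrable_add)
  show "(\<lambda>x. f x * g x) \<in> borel_measurable (lebesgue_on \<Omega>)"
    using L2_meas[OF assms(1)] L2_meas[OF assms(2)] by (rule borel_measurable_times)
  show "AE x in lebesgue_on \<Omega>. norm (f x * g x) \<le> norm ((f x)\<^sup>2 + (g x)\<^sup>2)"
  proof (rule AE_I2)
    fix x
    have "2 * \<bar>f x * g x\<bar> \<le> (f x)\<^sup>2 + (g x)\<^sup>2"
    proof -
      have "0 \<le> (\<bar>f x\<bar> - \<bar>g x\<bar>)\<^sup>2" by simp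
      then show ?thesis by (simp add: power2_eq_square algebra_simps abs_mult)
    qed
    moreover have "0 \<le> (f x)\<^sup>2 + (g x)\<^sup>2" by simp
    ultimately show "norm (f x * g x) \<le> norm ((f x)\<^sup>2 + (g x)\<^sup>2)" by simp
  qed
qed

lemma L2_lin:
  assumes "L2 \<Omega> f" "L2 \<Omega> g"
  shows "L2 \<Omega> (\<lambda>x. a * f x + b * g x)"
  unfolding L2_def
proof
  show m: "(\<lambda>x. a * f x + b * g x) \<in> borel_measurable (lebesgue_on \<Omega>)"
    using L2_meas[OF assms(1)] L2_meas[OF assms(2)] by measurable
  show "integrable (lebesgue_on \<Omega>) (\<lambda>x. (a * f x + b * g x)\<^sup>2)"
  proof (rule Bochner_Integration.integrable_bound)
    show "integrable (lebesgue_on \<Omega>) (\<lambda>x. 2 * a\<^sup>2 * (f x)\<^sup>2 + 2 * b\<^sup>2 * (g x)\<^sup>2)"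
      using L2_sq[OF assms(1)] L2_sq[OF assms(2)]
      by (intro Bochner_Integration.integrable_add integrable_mult_right)
    show "(\<lambda>x. (a * f x + b * g x)\<^sup>2) \<in> borel_measurable (lebesgue_on \<Omega>)"
      using m by measurable
    show "AE x in lebesgue_on \<Omega>. norm ((a * f x + b * g x)\<^sup>2) \<le> norm (2 * a\<^sup>2 * (f x)\<^sup>2 + 2 * b\<^sup>2 * (g x)\<^sup>2)"
    proof (rule AE_I2)
      fix x
      have "(a * f x + b * g x)\<^sup>2 \<le> 2 * a\<^sup>2 * (f x)\<^sup>2 + 2 * b\<^sup>2 * (g x)\<^sup>2"
      proof -
        have "0 \<le> (a * f x - b * g x)\<^sup>2" by simp
        then show ?thesis by (simp add: power2_eq_square algebra_simps)
      qed
      moreover have "0 \<le> 2 * a\<^sup>2 * (f x)\<^sup>2 + 2 * b\<^sup>2 * (g x)\<^sup>2" by simp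
      ultimately show "norm ((a * f x + b * g x)\<^sup>2) \<le> norm (2 * a\<^sup>2 * (f x)\<^sup>2 + 2 * b\<^sup>2 * (g x)\<^sup>2)"
        by simp
    qed
  qed
qed

lemma bdd_mult_int:
  assumes "integrable (lebesgue_on \<Omega>) f" "h \<in> borel_measurable (lebesgue_on \<Omega>)"
    "\<forall>x\<in>\<Omega>. \<bar>h x\<bar> \<le> B"
  shows "integrable (lebesgue_on \<Omega>) (\<lambda>x. h x * (f x::real))"
proof (rule Bochner_Integration.integrable_bound)
  show "integrable (lebesgue_on \<Omega>) (\<lambda>x. B * f x)"
    using assms(1) by (rule integrable_mult_right)
  show "(\<lambda>x. h x * f x) \<in> borel_measurable (lebesgue_on \<Omega>)"
    using assms(2) borel_measurable_integrable[OF assms(1)] by (rule borel_measurable_times)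
  show "AE x in lebesgue_on \<Omega>. norm (h x * f x) \<le> norm (B * f x)"
  proof (rule AE_I2)
    fix x assume "x \<in> space (lebesgue_on \<Omega>)"
    then have "\<bar>h x\<bar> \<le> B" using assms(3) by simp
    then have "\<bar>h x\<bar> * \<bar>f x\<bar> \<le> B * \<bar>f x\<bar>" by (intro mult_right_mono) auto
    moreover have "0 \<le> B" using \<open>\<bar>h x\<bar> \<le> B\<close> by linarith
    ultimately show "norm (h x * f x) \<le> norm (B * f x)" by (simp add: abs_mult)
  qed
qed

lemma L2_bdd:
  assumes "L2 \<Omega> f" "h \<in> borel_measurable (lebesgue_on \<Omega>)" "\<forall>x\<in>\<Omega>. \<bar>h x\<bar> \<le> B"
  shows "L2 \<Omega> (\<lambda>x. h x * f x)"
  unfolding L2_def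
proof
  show "(\<lambda>x. h x * f x) \<in> borel_measurable (lebesgue_on \<Omega>)"
    using assms(2) L2_meas[OF assms(1)] by (rule borel_measurable_times)
  have h2m: "(\<lambda>x. (h x)\<^sup>2) \<in> borel_measurable (lebesgue_on \<Omega>)" using assms(2) by measurable
  have "\<forall>x\<in>\<Omega>. \<bar>(h x)\<^sup>2\<bar> \<le> B\<^sup>2"
  proof
    fix x assume "x \<in> \<Omega>"
    then have "\<bar>h x\<bar> \<le> B" using assms(3) by simp
    then have "\<bar>h x\<bar>\<^sup>2 \<le> B\<^sup>2" by (intro power_mono) auto
    then show "\<bar>(h x)\<^sup>2\<bar> \<le> B\<^sup>2" by simp
  qed
  from bdd_mult_int[OF L2_sq[OF assms(1)] h2m this]
  show "integrable (lebesgue_on \<Omega>) (\<lambda>x. (h x * f x)\<^sup>2)" by (simp add: power_mult_distrib)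
qed

lemma L2_const:
  assumes "bounded \<Omega>" "open \<Omega>"
  shows "L2 (\<Omega>::'a::euclidean_space set) (\<lambda>x. c)"
  unfolding L2_def using int_const[OF assms] by simp

lemma L2_int:
  assumes "bounded \<Omega>" "open \<Omega>" "L2 (\<Omega>::'a::euclidean_space set) f"
  shows "integrable (lebesgue_on \<Omega>) f"
  using L2_mult[OF assms(3) L2_const[OF assms(1,2), of 1]] by simp

lemma cont_bdd:
  assumes "continuous_on UNIV (f::'a::euclidean_space \<Rightarrow> real)" "bounded \<Omega>"
  shows "\<exists>B. \<forall>x\<in>\<Omega>. \<bar>f x\<bar> \<le> B"
proof -
  have "compact (f ` closure \<Omega>)"
    using assms by (intro compact_continuous_image continuous_on_subset[OF assms(1)]) auto
  then have "bounded (f ` closure \<Omega>)" by (rule compact_imp_bounded)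
  then obtain B where "\<forall>y\<in>f ` closure \<Omega>. norm y \<le> B" unfolding bounded_iff by blast
  then show ?thesis using closure_subset by fastforce
qed

lemma cont_meas:
  assumes "continuous_on UNIV (f::'a::euclidean_space \<Rightarrow> real)" "open \<Omega>"
  shows "f \<in> borel_measurable (lebesgue_on \<Omega>)"
  using continuous_imp_measurable_on_sets_lebesgue[OF continuous_on_subset[OF assms(1)] open_sets_lebesgue[OF assms(2)]]
  by simp

lemma cont_mult_int:
  assumes "continuous_on UNIV (h::'a::euclidean_space \<Rightarrow> real)" "bounded \<Omega>" "open \<Omega>"
    "integrable (lebesgue_on \<Omega>) f"
  shows "integrable (lebesgue_on \<Omega>) (\<lambda>x. h x * f x)" "integrable (lebesgue_on \<Omega>) (\<lambda>x. f x * h x)"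
proof -
  obtain B where "\<forall>x\<in>\<Omega>. \<bar>h x\<bar> \<le> B" using cont_bdd[OF assms(1,2)] by blast
  from bdd_mult_int[OF assms(4) cont_meas[OF assms(1,3)] this]
  show "integrable (lebesgue_on \<Omega>) (\<lambda>x. h x * f x)" .
  then show "integrable (lebesgue_on \<Omega>) (\<lambda>x. f x * h x)" by (simp add: mult.commute)
qed

lemma test_cont:
  assumes "test_fun \<Omega> \<phi>"
  shows "continuous_on UNIV \<phi>" "\<And>i. i \<in> Basis \<Longrightarrow> continuous_on UNIV (\<lambda>x. pd \<phi> x i)"
proof -
  have "\<forall>x. \<phi> differentiable at x" using assms unfolding test_fun_def by blast
  then show "continuous_on UNIV \<phi>"
    by (simp add: continuous_at_imp_continuous_on differentiable_imp_continuous_within)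
  show "\<And>i. i \<in> Basis \<Longrightarrow> continuous_on UNIV (\<lambda>x. pd \<phi> x i)"
    using assms unfolding test_fun_def by blast
qed

lemma L2v_comp: "L2v \<Omega> v \<Longrightarrow> i \<in> Basis \<Longrightarrow> L2 \<Omega> (\<lambda>x. v x \<bullet> i)"
  by (simp add: L2v_def)

lemma L2v_inner:
  assumes "L2v \<Omega> u" "L2v \<Omega> v"
  shows "integrable (lebesgue_on \<Omega>) (\<lambda>x. u x \<bullet> v x)"
proof -
  have "integrable (lebesgue_on \<Omega>) (\<lambda>x. \<Sum>i\<in>Basis. (u x \<bullet> i) * (v x \<bullet> i))"
    using assms by (intro Bochner_Integration.integrable_sum L2_mult L2v_comp)
  then show ?thesis by (simp add: euclidean_inner[symmetric])
qed

lemma L2v_lin: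
  assumes "L2v \<Omega> u" "L2v \<Omega> v"
  shows "L2v \<Omega> (\<lambda>x. a *\<^sub>R u x + b *\<^sub>R v x)"
  unfolding L2v_def
proof
  fix i :: 'a assume i: "i \<in> Basis"
  have "L2 \<Omega> (\<lambda>x. a * (u x \<bullet> i) + b * (v x \<bullet> i))"
    using assms i by (intro L2_lin L2v_comp)
  then show "L2 \<Omega> (\<lambda>x. (a *\<^sub>R u x + b *\<^sub>R v x) \<bullet> i)" by (simp add: inner_add_left)
qed

lemma L2v_bdd:
  assumes "L2v \<Omega> u" "h \<in> borel_measurable (lebesgue_on \<Omega>)" "\<forall>x\<in>\<Omega>. \<bar>h x\<bar> \<le> B"
  shows "L2v \<Omega> (\<lambda>x. h x *\<^sub>R u x)"
  unfolding L2v_def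
proof
  fix i :: 'a assume i: "i \<in> Basis"
  have "L2 \<Omega> (\<lambda>x. h x * (u x \<bullet> i))"
    using assms i by (intro L2_bdd L2v_comp)
  then show "L2 \<Omega> (\<lambda>x. (h x *\<^sub>R u x) \<bullet> i)" by simp
qed

lemma test_int:
  assumes "bounded \<Omega>" "open \<Omega>" "test_fun \<Omega> \<phi>" "integrable (lebesgue_on \<Omega>) f"
  shows "integrable (lebesgue_on \<Omega>) (\<lambda>x. f x * \<phi> x)"
    "\<And>i. i \<in> Basis \<Longrightarrow> integrable (lebesgue_on \<Omega>) (\<lambda>x. f x * pd \<phi> x i)"
  using cont_mult_int(2)[OF test_cont(1)[OF assms(3)] assms(1,2,4)]
    cont_mult_int(2)[OF test_cont(2)[OF assms(3)] assms(1,2,4)] by auto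

lemma cgrad_inner: "v \<bullet> cgrad \<phi> x = (\<Sum>i\<in>Basis. (v \<bullet> i) * pd \<phi> x i)"
  unfolding cgrad_def by (simp add: inner_sum_right mult.commute)

lemma test_cgrad_int:
  assumes "bounded \<Omega>" "open \<Omega>" "test_fun \<Omega> \<phi>" "L2v \<Omega> v"
  shows "integrable (lebesgue_on \<Omega>) (\<lambda>x. v x \<bullet> cgrad \<phi> x)"
proof -
  have "integrable (lebesgue_on \<Omega>) (\<lambda>x. \<Sum>i\<in>Basis. (v x \<bullet> i) * pd \<phi> x i)"
  proof (rule Bochner_Integration.integrable_sum)
    fix i :: 'a assume i: "i \<in> Basis"
    show "integrable (lebesgue_on \<Omega>) (\<lambda>x. (v x \<bullet> i) * pd \<phi> x i)"
      by (rule test_int(2)[OF assms(1-3) L2_int[OF assms(1,2) L2v_comp[OF assms(4) i]] i])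
  qed
  then show ?thesis by (simp add: cgrad_inner)
qed

lemma int_lin:
  assumes "integrable M f" "integrable M g"
  shows "integral\<^sup>L M (\<lambda>x. a * f x + b * g x) = a * integral\<^sup>L M f + b * integral\<^sup>L M (g::_\<Rightarrow>real)"
  using assms by simp

lemma wg_lin:
  assumes bo: "bounded \<Omega>" and op: "open \<Omega>" and p: "L2 \<Omega> p1" "L2 \<Omega> p2"
    and G: "is_weak_grad \<Omega> p1 G1" "is_weak_grad \<Omega> p2 G2"
  shows "is_weak_grad \<Omega> (\<lambda>x. a * p1 x + b * p2 x) (\<lambda>x. a *\<^sub>R G1 x + b *\<^sub>R G2 x)"
  unfolding is_weak_grad_def
proof (intro conjI allI impI ballI)
  show "L2v \<Omega> (\<lambda>x. a *\<^sub>R G1 x + b *\<^sub>R G2 x)"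
    using G by (intro L2v_lin) (auto simp: is_weak_grad_def)
  fix \<phi> i assume t: "test_fun \<Omega> \<phi>" and i: "(i::'a) \<in> Basis"
  have e1: "(\<lambda>x. (a * p1 x + b * p2 x) * pd \<phi> x i) = (\<lambda>x. a * (p1 x * pd \<phi> x i) + b * (p2 x * pd \<phi> x i))"
    by (rule ext) (simp add: algebra_simps)
  have e2: "(\<lambda>x. ((a *\<^sub>R G1 x + b *\<^sub>R G2 x) \<bullet> i) * \<phi> x) = (\<lambda>x. a * ((G1 x \<bullet> i) * \<phi> x) + b * ((G2 x \<bullet> i) * \<phi> x))"
    by (rule ext) (simp add: algebra_simps inner_add_left)
  have i1: "integrable (lebesgue_on \<Omega>) (\<lambda>x. p1 x * pd \<phi> x i)" "integrable (lebesgue_on \<Omega>) (\<lambda>x. p2 x * pd \<phi> x i)"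
    using test_int(2)[OF bo op t L2_int[OF bo op p(1)] i] test_int(2)[OF bo op t L2_int[OF bo op p(2)] i] .
  have L2G: "L2 \<Omega> (\<lambda>x. G1 x \<bullet> i)" "L2 \<Omega> (\<lambda>x. G2 x \<bullet> i)"
    using G i by (auto simp: is_weak_grad_def L2v_def)
  have i2: "integrable (lebesgue_on \<Omega>) (\<lambda>x. (G1 x \<bullet> i) * \<phi> x)" "integrable (lebesgue_on \<Omega>) (\<lambda>x. (G2 x \<bullet> i) * \<phi> x)"
    using test_int(1)[OF bo op t L2_int[OF bo op L2G(1)]] test_int(1)[OF bo op t L2_int[OF bo op L2G(2)]] .
  have h1: "integral\<^sup>L (lebesgue_on \<Omega>) (\<lambda>x. p1 x * pd \<phi> x i) = - integral\<^sup>L (lebesgue_on \<Omega>) (\<lambda>x. (G1 x \<bullet> i) * \<phi> x)"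
    using G(1) t i unfolding is_weak_grad_def by blast
  have h2: "integral\<^sup>L (lebesgue_on \<Omega>) (\<lambda>x. p2 x * pd \<phi> x i) = - integral\<^sup>L (lebesgue_on \<Omega>) (\<lambda>x. (G2 x \<bullet> i) * \<phi> x)"
    using G(2) t i unfolding is_weak_grad_def by blast
  show "integral\<^sup>L (lebesgue_on \<Omega>) (\<lambda>x. (a * p1 x + b * p2 x) * pd \<phi> x i) =
        - integral\<^sup>L (lebesgue_on \<Omega>) (\<lambda>x. ((a *\<^sub>R G1 x + b *\<^sub>R G2 x) \<bullet> i) * \<phi> x)"
    unfolding e1 e2 int_lin[OF i1] int_lin[OF i2] h1 h2 by simp
qed

lemma AE_vec_eq:
  assumes "\<And>i. i \<in> Basis \<Longrightarrow> AE x in M. (G x :: 'a::euclidean_space) \<bullet> i = G' x \<bullet> i"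
  shows "AE x in M. G x = G' x"
proof -
  have "AE x in M. \<forall>i\<in>Basis. G x \<bullet> i = G' x \<bullet> i"
    by (rule AE_finite_allI[OF finite_Basis]) (rule assms)
  then show ?thesis
  proof (rule eventually_mono)
    fix x assume h: "\<forall>i\<in>Basis. G x \<bullet> i = G' x \<bullet> i"
    show "G x = G' x"
    proof (rule euclidean_eqI)
      fix b :: 'a assume "b \<in> Basis"
      then show "G x \<bullet> b = G' x \<bullet> b" using h by blast
    qed
  qed
qed

lemma uniq_core:
  assumes bo: "bounded \<Omega>" and op: "open \<Omega>" and f: "L2 \<Omega> f" "L2 \<Omega> f'"
    and eq: "\<forall>\<phi>. test_fun \<Omega> \<phi> \<longrightarrow> integral\<^sup>L (lebesgue_on \<Omega>) (\<lambda>x. f x * \<phi> x) = integral\<^sup>L (lebesgue_on \<Omega>) (\<lambda>x. f' x * \<phi> x)"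
  shows "AE x in lebesgue_on \<Omega>. f x = f' x"
proof -
  have fi: "integrable (lebesgue_on \<Omega>) f" "integrable (lebesgue_on \<Omega>) f'"
    using L2_int[OF bo op f(1)] L2_int[OF bo op f(2)] .
  have "AE x in lebesgue_on \<Omega>. f x - f' x = 0"
  proof (rule FL[OF op])
    show "integrable (lebesgue_on \<Omega>) (\<lambda>x. f x - f' x)" using fi by (rule Bochner_Integration.integrable_diff)
    show "\<forall>\<phi>. test_fun \<Omega> \<phi> \<longrightarrow> integral\<^sup>L (lebesgue_on \<Omega>) (\<lambda>x. (f x - f' x) * \<phi> x) = 0"
    proof (intro allI impI)
      fix \<phi> assume t: "test_fun \<Omega> \<phi>"
      have "(\<lambda>x. (f x - f' x) * \<phi> x) = (\<lambda>x. f x * \<phi> x - f' x * \<phi> x)" by (rule ext) (simp add: algebra_simps)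
      moreover have "integral\<^sup>L (lebesgue_on \<Omega>) (\<lambda>x. f x * \<phi> x - f' x * \<phi> x) =
          integral\<^sup>L (lebesgue_on \<Omega>) (\<lambda>x. f x * \<phi> x) - integral\<^sup>L (lebesgue_on \<Omega>) (\<lambda>x. f' x * \<phi> x)"
        by (rule Bochner_Integration.integral_diff[OF test_int(1)[OF bo op t fi(1)] test_int(1)[OF bo op t fi(2)]])
      ultimately show "integral\<^sup>L (lebesgue_on \<Omega>) (\<lambda>x. (f x - f' x) * \<phi> x) = 0" using eq t by simp
    qed
  qed
  then show ?thesis by (rule eventually_mono) simp
qed

lemma wg_uniq:
  assumes bo: "bounded \<Omega>" and op: "open \<Omega>" and G: "is_weak_grad \<Omega> p G" "is_weak_grad \<Omega> p G'"
  shows "AE x in lebesgue_on \<Omega>. G x = G' x"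
proof (rule AE_vec_eq)
  fix i :: 'a assume i: "i \<in> Basis"
  show "AE x in lebesgue_on \<Omega>. G x \<bullet> i = G' x \<bullet> i"
  proof (rule uniq_core[OF bo op])
    show "L2 \<Omega> (\<lambda>x. G x \<bullet> i)" "L2 \<Omega> (\<lambda>x. G' x \<bullet> i)" using G i by (auto simp: is_weak_grad_def L2v_def)
    show "\<forall>\<phi>. test_fun \<Omega> \<phi> \<longrightarrow> integral\<^sup>L (lebesgue_on \<Omega>) (\<lambda>x. (G x \<bullet> i) * \<phi> x) = integral\<^sup>L (lebesgue_on \<Omega>) (\<lambda>x. (G' x \<bullet> i) * \<phi> x)"
    proof (intro allI impI)
      fix \<phi> assume t: "test_fun \<Omega> \<phi>"
      have "integral\<^sup>L (lebesgue_on \<Omega>) (\<lambda>x. p x * pd \<phi> x i) = - integral\<^sup>L (lebesgue_on \<Omega>) (\<lambda>x. (G x \<bullet> i) * \<phi> x)"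
           "integral\<^sup>L (lebesgue_on \<Omega>) (\<lambda>x. p x * pd \<phi> x i) = - integral\<^sup>L (lebesgue_on \<Omega>) (\<lambda>x. (G' x \<bullet> i) * \<phi> x)"
        using G i t unfolding is_weak_grad_def by blast+
      then show "integral\<^sup>L (lebesgue_on \<Omega>) (\<lambda>x. (G x \<bullet> i) * \<phi> x) = integral\<^sup>L (lebesgue_on \<Omega>) (\<lambda>x. (G' x \<bullet> i) * \<phi> x)"
        by simp
    qed
  qed
qed

lemma wd_lin:
  assumes bo: "bounded \<Omega>" and op: "open \<Omega>" and v: "L2v \<Omega> v1" "L2v \<Omega> v2"
    and D: "is_weak_div \<Omega> v1 g1" "is_weak_div \<Omega> v2 g2"
  shows "is_weak_div \<Omega> (\<lambda>x. a *\<^sub>R v1 x + b *\<^sub>R v2 x) (\<lambda>x. a * g1 x + b * g2 x)"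
  unfolding is_weak_div_def
proof (intro conjI allI impI)
  show "L2 \<Omega> (\<lambda>x. a * g1 x + b * g2 x)"
    using D by (intro L2_lin) (auto simp: is_weak_div_def)
  fix \<phi> assume t: "test_fun \<Omega> \<phi>"
  have e1: "(\<lambda>x. (a *\<^sub>R v1 x + b *\<^sub>R v2 x) \<bullet> cgrad \<phi> x) = (\<lambda>x. a * (v1 x \<bullet> cgrad \<phi> x) + b * (v2 x \<bullet> cgrad \<phi> x))"
    by (rule ext) (simp add: inner_add_left)
  have e2: "(\<lambda>x. (a * g1 x + b * g2 x) * \<phi> x) = (\<lambda>x. a * (g1 x * \<phi> x) + b * (g2 x * \<phi> x))"
    by (rule ext) (simp add: algebra_simps)
  have i1: "integrable (lebesgue_on \<Omega>) (\<lambda>x. v1 x \<bullet> cgrad \<phi> x)" "integrable (lebesgue_on \<Omega>) (\<lambda>x. v2 x \<bullet> cgrad \<phi> x)"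
    using test_cgrad_int[OF bo op t v(1)] test_cgrad_int[OF bo op t v(2)] .
  have L2g: "L2 \<Omega> g1" "L2 \<Omega> g2" using D by (auto simp: is_weak_div_def)
  have i2: "integrable (lebesgue_on \<Omega>) (\<lambda>x. g1 x * \<phi> x)" "integrable (lebesgue_on \<Omega>) (\<lambda>x. g2 x * \<phi> x)"
    using test_int(1)[OF bo op t L2_int[OF bo op L2g(1)]] test_int(1)[OF bo op t L2_int[OF bo op L2g(2)]] .
  have h1: "ipv \<Omega> v1 (cgrad \<phi>) = - ip \<Omega> g1 \<phi>" "ipv \<Omega> v2 (cgrad \<phi>) = - ip \<Omega> g2 \<phi>"
    using D t unfolding is_weak_div_def by blast+
  show "ipv \<Omega> (\<lambda>x. a *\<^sub>R v1 x + b *\<^sub>R v2 x) (cgrad \<phi>) = - ip \<Omega> (\<lambda>x. a * g1 x + b * g2 x) \<phi>"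
    using h1 unfolding ipv_def ip_def e1 e2 int_lin[OF i1] int_lin[OF i2] by simp
qed

lemma wd_uniq:
  assumes bo: "bounded \<Omega>" and op: "open \<Omega>" and D: "is_weak_div \<Omega> v g" "is_weak_div \<Omega> v g'"
  shows "AE x in lebesgue_on \<Omega>. g x = g' x"
proof (rule uniq_core[OF bo op])
  show "L2 \<Omega> g" "L2 \<Omega> g'" using D by (auto simp: is_weak_div_def)
  show "\<forall>\<phi>. test_fun \<Omega> \<phi> \<longrightarrow> integral\<^sup>L (lebesgue_on \<Omega>) (\<lambda>x. g x * \<phi> x) = integral\<^sup>L (lebesgue_on \<Omega>) (\<lambda>x. g' x * \<phi> x)"
  proof (intro allI impI)
    fix \<phi> assume t: "test_fun \<Omega> \<phi>"
    have "ipv \<Omega> v (cgrad \<phi>) = - ip \<Omega> g \<phi>" "ipv \<Omega> v (cgrad \<phi>) = - ip \<Omega> g' \<phi>"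
      using D t unfolding is_weak_div_def by blast+
    then show "integral\<^sup>L (lebesgue_on \<Omega>) (\<lambda>x. g x * \<phi> x) = integral\<^sup>L (lebesgue_on \<Omega>) (\<lambda>x. g' x * \<phi> x)"
      unfolding ip_def by simp
  qed
qed

lemma wc_lin:
  assumes bo: "bounded \<Omega>" and op: "open \<Omega>" and w: "L2v \<Omega> w1" "L2v \<Omega> w2"
    and C: "is_weak_curl \<Omega> w1 C1" "is_weak_curl \<Omega> w2 C2"
  shows "is_weak_curl \<Omega> (\<lambda>x. a *\<^sub>R w1 x + b *\<^sub>R w2 x) (\<lambda>x i j. a * C1 x i j + b * C2 x i j)"
  unfolding is_weak_curl_def
proof (intro conjI allI impI ballI)
  fix i j :: 'a assume i: "i \<in> Basis" and j: "j \<in> Basis"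
  show "L2 \<Omega> (\<lambda>x. a * C1 x i j + b * C2 x i j)"
    using C i j by (intro L2_lin) (auto simp: is_weak_curl_def)
next
  fix \<phi> and i j :: 'a assume t: "test_fun \<Omega> \<phi>" and i: "i \<in> Basis" and j: "j \<in> Basis"
  let ?F = "\<lambda>w x. (w x \<bullet> j) * pd \<phi> x i - (w x \<bullet> i) * pd \<phi> x j"
  have e1: "(\<lambda>x. ((a *\<^sub>R w1 x + b *\<^sub>R w2 x) \<bullet> j) * pd \<phi> x i - ((a *\<^sub>R w1 x + b *\<^sub>R w2 x) \<bullet> i) * pd \<phi> x j)
      = (\<lambda>x. a * ?F w1 x + b * ?F w2 x)"
    by (rule ext) (simp add: algebra_simps inner_add_left)
  have e2: "(\<lambda>x. (a * C1 x i j + b * C2 x i j) * \<phi> x) = (\<lambda>x. a * (C1 x i j * \<phi> x) + b * (C2 x i j * \<phi> x))"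
    by (rule ext) (simp add: algebra_simps)
  have iF: "integrable (lebesgue_on \<Omega>) (?F w)" if "L2v \<Omega> w" for w
  proof (rule Bochner_Integration.integrable_diff)
    show "integrable (lebesgue_on \<Omega>) (\<lambda>x. (w x \<bullet> j) * pd \<phi> x i)"
      by (rule test_int(2)[OF bo op t L2_int[OF bo op L2v_comp[OF that j]] i])
    show "integrable (lebesgue_on \<Omega>) (\<lambda>x. (w x \<bullet> i) * pd \<phi> x j)"
      by (rule test_int(2)[OF bo op t L2_int[OF bo op L2v_comp[OF that i]] j])
  qed
  have L2C: "L2 \<Omega> (\<lambda>x. C1 x i j)" "L2 \<Omega> (\<lambda>x. C2 x i j)" using C i j by (auto simp: is_weak_curl_def)
  have i2: "integrable (lebesgue_on \<Omega>) (\<lambda>x. C1 x i j * \<phi> x)" "integrable (lebesgue_on \<Omega>) (\<lambda>x. C2 x i j * \<phi> x)"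
    using test_int(1)[OF bo op t L2_int[OF bo op L2C(1)]] test_int(1)[OF bo op t L2_int[OF bo op L2C(2)]] .
  have h1: "integral\<^sup>L (lebesgue_on \<Omega>) (?F w1) = - integral\<^sup>L (lebesgue_on \<Omega>) (\<lambda>x. C1 x i j * \<phi> x)"
    using C(1) t i j unfolding is_weak_curl_def by blast
  have h2: "integral\<^sup>L (lebesgue_on \<Omega>) (?F w2) = - integral\<^sup>L (lebesgue_on \<Omega>) (\<lambda>x. C2 x i j * \<phi> x)"
    using C(2) t i j unfolding is_weak_curl_def by blast
  show "integral\<^sup>L (lebesgue_on \<Omega>) (\<lambda>x. ((a *\<^sub>R w1 x + b *\<^sub>R w2 x) \<bullet> j) * pd \<phi> x i - ((a *\<^sub>R w1 x + b *\<^sub>R w2 x) \<bullet> i) * pd \<phi> x j)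
     = - integral\<^sup>L (lebesgue_on \<Omega>) (\<lambda>x. (a * C1 x i j + b * C2 x i j) * \<phi> x)"
    unfolding e1 e2 int_lin[OF iF[OF w(1)] iF[OF w(2)]] int_lin[OF i2] h1 h2 by simp
qed

lemma wc_uniq:
  assumes bo: "bounded \<Omega>" and op: "open \<Omega>" and C: "is_weak_curl \<Omega> w C" "is_weak_curl \<Omega> w C'"
  shows "AE x in lebesgue_on \<Omega>. \<forall>i\<in>Basis. \<forall>j\<in>Basis. C x i j = C' x i j"
proof (rule AE_finite_allI[OF finite_Basis], rule AE_finite_allI[OF finite_Basis])
  fix i j :: 'a assume i: "i \<in> Basis" and j: "j \<in> Basis"
  show "AE x in lebesgue_on \<Omega>. C x i j = C' x i j"
  proof (rule uniq_core[OF bo op])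
    show "L2 \<Omega> (\<lambda>x. C x i j)" "L2 \<Omega> (\<lambda>x. C' x i j)" using C i j by (auto simp: is_weak_curl_def)
    show "\<forall>\<phi>. test_fun \<Omega> \<phi> \<longrightarrow> integral\<^sup>L (lebesgue_on \<Omega>) (\<lambda>x. C x i j * \<phi> x) = integral\<^sup>L (lebesgue_on \<Omega>) (\<lambda>x. C' x i j * \<phi> x)"
    proof (intro allI impI)
      fix \<phi> assume t: "test_fun \<Omega> \<phi>"
      have "integral\<^sup>L (lebesgue_on \<Omega>) (\<lambda>x. (w x \<bullet> j) * pd \<phi> x i - (w x \<bullet> i) * pd \<phi> x j) = - integral\<^sup>L (lebesgue_on \<Omega>) (\<lambda>x. C x i j * \<phi> x)"
           "integral\<^sup>L (lebesgue_on \<Omega>) (\<lambda>x. (w x \<bullet> j) * pd \<phi> x i - (w x \<bullet> i) * pd \<phi> x j) = - integral\<^sup>L (lebesgue_on \<Omega>) (\<lambda>x. C' x i j * \<phi> x)"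
        using C i j t unfolding is_weak_curl_def by blast+
      then show "integral\<^sup>L (lebesgue_on \<Omega>) (\<lambda>x. C x i j * \<phi> x) = integral\<^sup>L (lebesgue_on \<Omega>) (\<lambda>x. C' x i j * \<phi> x)"
        by simp
    qed
  qed
qed

lemma wgrad_ok: "H1 \<Omega> p \<Longrightarrow> is_weak_grad \<Omega> p (wgrad \<Omega> p)"
  unfolding H1_def wgrad_def by (metis someI_ex)

lemma wdiv_ok: "\<exists>g. is_weak_div \<Omega> v g \<Longrightarrow> is_weak_div \<Omega> v (wdiv \<Omega> v)"
  unfolding wdiv_def by (metis someI_ex)

lemma wcurl_ok: "\<exists>C. is_weak_curl \<Omega> w C \<Longrightarrow> is_weak_curl \<Omega> w (wcurl \<Omega> w)"
  unfolding wcurl_def by (metis someI_ex)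

lemma H1_L2: "H1 \<Omega> p \<Longrightarrow> L2 \<Omega> p" by (simp add: H1_def)

lemma wgrad_L2v: "H1 \<Omega> p \<Longrightarrow> L2v \<Omega> (wgrad \<Omega> p)"
  using wgrad_ok unfolding is_weak_grad_def by blast

lemma H1_lin:
  assumes bo: "bounded \<Omega>" and op: "open \<Omega>" and p: "H1 \<Omega> p1" "H1 \<Omega> p2"
    and eq: "\<forall>x. p x = a * p1 x + b * p2 x"
  shows "H1 \<Omega> p" "AE x in lebesgue_on \<Omega>. wgrad \<Omega> p x = a *\<^sub>R wgrad \<Omega> p1 x + b *\<^sub>R wgrad \<Omega> p2 x"
proof -
  have pe: "p = (\<lambda>x. a * p1 x + b * p2 x)" using eq by (simp add: fun_eq_iff)
  have wg: "is_weak_grad \<Omega> p (\<lambda>x. a *\<^sub>R wgrad \<Omega> p1 x + b *\<^sub>R wgrad \<Omega> p2 x)"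
    unfolding pe by (rule wg_lin[OF bo op H1_L2[OF p(1)] H1_L2[OF p(2)] wgrad_ok[OF p(1)] wgrad_ok[OF p(2)]])
  have L2p: "L2 \<Omega> p" unfolding pe by (rule L2_lin[OF H1_L2[OF p(1)] H1_L2[OF p(2)]])
  show H: "H1 \<Omega> p" unfolding H1_def using L2p wg by blast
  show "AE x in lebesgue_on \<Omega>. wgrad \<Omega> p x = a *\<^sub>R wgrad \<Omega> p1 x + b *\<^sub>R wgrad \<Omega> p2 x"
    by (rule wg_uniq[OF bo op wgrad_ok[OF H] wg])
qed

definition coef :: "'a::euclidean_space set \<Rightarrow> ('a \<Rightarrow> real) \<Rightarrow> real \<Rightarrow> bool" where
  "coef \<Omega> h B \<longleftrightarrow> h \<in> borel_measurable (lebesgue_on \<Omega>) \<and> (\<forall>x\<in>\<Omega>. \<bar>h x\<bar> \<le> B)"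

lemma U_L2v: "Uspace \<Omega> lam v \<Longrightarrow> L2v \<Omega> v" by (simp add: Uspace_def)
lemma U_div: "Uspace \<Omega> lam v \<Longrightarrow> is_weak_div \<Omega> v (wdiv \<Omega> v)"
  by (rule wdiv_ok) (simp add: Uspace_def)
lemma U_curl: "Uspace \<Omega> lam v \<Longrightarrow> is_weak_curl \<Omega> (\<lambda>x. lam x *\<^sub>R v x) (wcurl \<Omega> (\<lambda>x. lam x *\<^sub>R v x))"
  by (rule wcurl_ok) (simp add: Uspace_def)
lemma U_div_L2: "Uspace \<Omega> lam v \<Longrightarrow> L2 \<Omega> (wdiv \<Omega> v)"
  using U_div unfolding is_weak_div_def by blast
lemma U_curl_L2: "Uspace \<Omega> lam v \<Longrightarrow> i \<in> Basis \<Longrightarrow> j \<in> Basis \<Longrightarrow> L2 \<Omega> (\<lambda>x. wcurl \<Omega> (\<lambda>x. lam x *\<^sub>R v x) x i j)"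
  using U_curl unfolding is_weak_curl_def by blast
lemma U_ntz: "Uspace \<Omega> lam v \<Longrightarrow> H1 \<Omega> \<phi> \<Longrightarrow> ipv \<Omega> v (wgrad \<Omega> \<phi>) + ip \<Omega> (wdiv \<Omega> v) \<phi> = 0"
  by (simp add: Uspace_def normal_trace_zero_def)

lemma U_lin:
  assumes bo: "bounded \<Omega>" and op: "open \<Omega>" and cf: "coef \<Omega> lam B"
    and v: "Uspace \<Omega> lam v1" "Uspace \<Omega> lam v2"
    and eq: "\<forall>x. v x = a *\<^sub>R v1 x + b *\<^sub>R v2 x"
  shows "Uspace \<Omega> lam v"
    "AE x in lebesgue_on \<Omega>. wdiv \<Omega> v x = a * wdiv \<Omega> v1 x + b * wdiv \<Omega> v2 x"
    "AE x in lebesgue_on \<Omega>. \<forall>i\<in>Basis. \<forall>j\<in>Basis. wcurl \<Omega> (\<lambda>x. lam x *\<^sub>R v x) x i j =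
        a * wcurl \<Omega> (\<lambda>x. lam x *\<^sub>R v1 x) x i j + b * wcurl \<Omega> (\<lambda>x. lam x *\<^sub>R v2 x) x i j"
proof -
  have ve: "v = (\<lambda>x. a *\<^sub>R v1 x + b *\<^sub>R v2 x)" using eq by (simp add: fun_eq_iff)
  have lm: "lam \<in> borel_measurable (lebesgue_on \<Omega>)" "\<forall>x\<in>\<Omega>. \<bar>lam x\<bar> \<le> B" using cf by (auto simp: coef_def)
  have L2v: "L2v \<Omega> v" unfolding ve by (rule L2v_lin[OF U_L2v[OF v(1)] U_L2v[OF v(2)]])
  have wd: "is_weak_div \<Omega> v (\<lambda>x. a * wdiv \<Omega> v1 x + b * wdiv \<Omega> v2 x)"
    unfolding ve by (rule wd_lin[OF bo op U_L2v[OF v(1)] U_L2v[OF v(2)] U_div[OF v(1)] U_div[OF v(2)]])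
  have lve: "(\<lambda>x. lam x *\<^sub>R v x) = (\<lambda>x. a *\<^sub>R (lam x *\<^sub>R v1 x) + b *\<^sub>R (lam x *\<^sub>R v2 x))"
    unfolding ve by (rule ext) (simp add: algebra_simps)
  have wc: "is_weak_curl \<Omega> (\<lambda>x. lam x *\<^sub>R v x) (\<lambda>x i j. a * wcurl \<Omega> (\<lambda>x. lam x *\<^sub>R v1 x) x i j + b * wcurl \<Omega> (\<lambda>x. lam x *\<^sub>R v2 x) x i j)"
    unfolding lve
    by (rule wc_lin[OF bo op L2v_bdd[OF U_L2v[OF v(1)] lm] L2v_bdd[OF U_L2v[OF v(2)] lm] U_curl[OF v(1)] U_curl[OF v(2)]])
  have ex: "\<exists>g. is_weak_div \<Omega> v g" "\<exists>C. is_weak_curl \<Omega> (\<lambda>x. lam x *\<^sub>R v x) C" using wd wc by blast+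
  have aed: "AE x in lebesgue_on \<Omega>. wdiv \<Omega> v x = a * wdiv \<Omega> v1 x + b * wdiv \<Omega> v2 x"
    by (rule wd_uniq[OF bo op wdiv_ok[OF ex(1)] wd])
  show "AE x in lebesgue_on \<Omega>. \<forall>i\<in>Basis. \<forall>j\<in>Basis. wcurl \<Omega> (\<lambda>x. lam x *\<^sub>R v x) x i j =
        a * wcurl \<Omega> (\<lambda>x. lam x *\<^sub>R v1 x) x i j + b * wcurl \<Omega> (\<lambda>x. lam x *\<^sub>R v2 x) x i j"
    by (rule wc_uniq[OF bo op wcurl_ok[OF ex(2)] wc])
  have ntz: "normal_trace_zero \<Omega> v"
    unfolding normal_trace_zero_def
  proof (intro allI impI)
    fix \<phi> assume H: "H1 \<Omega> \<phi>"
    have Gv: "L2v \<Omega> (wgrad \<Omega> \<phi>)" by (rule wgrad_L2v[OF H])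
    have i1: "integrable (lebesgue_on \<Omega>) (\<lambda>x. v1 x \<bullet> wgrad \<Omega> \<phi> x)" "integrable (lebesgue_on \<Omega>) (\<lambda>x. v2 x \<bullet> wgrad \<Omega> \<phi> x)"
      using L2v_inner[OF U_L2v[OF v(1)] Gv] L2v_inner[OF U_L2v[OF v(2)] Gv] .
    have i2: "integrable (lebesgue_on \<Omega>) (\<lambda>x. wdiv \<Omega> v1 x * \<phi> x)" "integrable (lebesgue_on \<Omega>) (\<lambda>x. wdiv \<Omega> v2 x * \<phi> x)"
      using L2_mult[OF U_div_L2[OF v(1)] H1_L2[OF H]] L2_mult[OF U_div_L2[OF v(2)] H1_L2[OF H]] .
    have "ipv \<Omega> v (wgrad \<Omega> \<phi>) = integral\<^sup>L (lebesgue_on \<Omega>) (\<lambda>x. a * (v1 x \<bullet> wgrad \<Omega> \<phi> x) + b * (v2 x \<bullet> wgrad \<Omega> \<phi> x))"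
      unfolding ipv_def ve by (simp add: inner_add_left)
    also have "\<dots> = a * ipv \<Omega> v1 (wgrad \<Omega> \<phi>) + b * ipv \<Omega> v2 (wgrad \<Omega> \<phi>)"
      unfolding ipv_def by (rule int_lin[OF i1])
    finally have e1: "ipv \<Omega> v (wgrad \<Omega> \<phi>) = a * ipv \<Omega> v1 (wgrad \<Omega> \<phi>) + b * ipv \<Omega> v2 (wgrad \<Omega> \<phi>)" .
    have "ip \<Omega> (wdiv \<Omega> v) \<phi> = integral\<^sup>L (lebesgue_on \<Omega>) (\<lambda>x. a * (wdiv \<Omega> v1 x * \<phi> x) + b * (wdiv \<Omega> v2 x * \<phi> x))"
      unfolding ip_def
    proof (rule integral_cong_AE)
      show "(\<lambda>x. wdiv \<Omega> v x * \<phi> x) \<in> borel_measurable (lebesgue_on \<Omega>)"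
        using L2_mult[OF wdiv_ok[OF ex(1), unfolded is_weak_div_def, THEN conjunct1] H1_L2[OF H]]
        by (rule borel_measurable_integrable)
      show "(\<lambda>x. a * (wdiv \<Omega> v1 x * \<phi> x) + b * (wdiv \<Omega> v2 x * \<phi> x)) \<in> borel_measurable (lebesgue_on \<Omega>)"
        using i2 by (intro borel_measurable_integrable Bochner_Integration.integrable_add integrable_mult_right)
      show "AE x in lebesgue_on \<Omega>. wdiv \<Omega> v x * \<phi> x = a * (wdiv \<Omega> v1 x * \<phi> x) + b * (wdiv \<Omega> v2 x * \<phi> x)"
        using aed by (rule eventually_mono) (simp add: algebra_simps)
    qed
    also have "\<dots> = a * ip \<Omega> (wdiv \<Omega> v1) \<phi> + b * ip \<Omega> (wdiv \<Omega> v2) \<phi>"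
      unfolding ip_def by (rule int_lin[OF i2])
    finally have e2: "ip \<Omega> (wdiv \<Omega> v) \<phi> = a * ip \<Omega> (wdiv \<Omega> v1) \<phi> + b * ip \<Omega> (wdiv \<Omega> v2) \<phi>" .
    have z: "ipv \<Omega> v1 (wgrad \<Omega> \<phi>) + ip \<Omega> (wdiv \<Omega> v1) \<phi> = 0" "ipv \<Omega> v2 (wgrad \<Omega> \<phi>) + ip \<Omega> (wdiv \<Omega> v2) \<phi> = 0"
      using U_ntz[OF v(1) H] U_ntz[OF v(2) H] .
    have "ipv \<Omega> v (wgrad \<Omega> \<phi>) + ip \<Omega> (wdiv \<Omega> v) \<phi>
        = a * (ipv \<Omega> v1 (wgrad \<Omega> \<phi>) + ip \<Omega> (wdiv \<Omega> v1) \<phi>) + b * (ipv \<Omega> v2 (wgrad \<Omega> \<phi>) + ip \<Omega> (wdiv \<Omega> v2) \<phi>)"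
      unfolding e1 e2 by (simp add: algebra_simps)
    then show "ipv \<Omega> v (wgrad \<Omega> \<phi>) + ip \<Omega> (wdiv \<Omega> v) \<phi> = 0" using z by simp
  qed
  show "Uspace \<Omega> lam v" unfolding Uspace_def using L2v ex ntz by blast
  show "AE x in lebesgue_on \<Omega>. wdiv \<Omega> v x = a * wdiv \<Omega> v1 x + b * wdiv \<Omega> v2 x" by (rule aed)
qed

lemma P_lin:
  assumes bo: "bounded \<Omega>" and op: "open \<Omega>" and p: "Pspace \<Omega> p1" "Pspace \<Omega> p2"
    and eq: "\<forall>x. p x = a * p1 x + b * p2 x"
  shows "Pspace \<Omega> p" "AE x in lebesgue_on \<Omega>. wgrad \<Omega> p x = a *\<^sub>R wgrad \<Omega> p1 x + b *\<^sub>R wgrad \<Omega> p2 x"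
proof -
  have H: "H1 \<Omega> p1" "H1 \<Omega> p2" using p by (auto simp: Pspace_def)
  show "AE x in lebesgue_on \<Omega>. wgrad \<Omega> p x = a *\<^sub>R wgrad \<Omega> p1 x + b *\<^sub>R wgrad \<Omega> p2 x"
    by (rule H1_lin(2)[OF bo op H eq])
  have pe: "p = (\<lambda>x. a * p1 x + b * p2 x)" using eq by (simp add: fun_eq_iff)
  have i: "integrable (lebesgue_on \<Omega>) (\<lambda>x. p1 x * 1)" "integrable (lebesgue_on \<Omega>) (\<lambda>x. p2 x * 1)"
    using L2_mult[OF H1_L2[OF H(1)] L2_const[OF bo op]] L2_mult[OF H1_L2[OF H(2)] L2_const[OF bo op]] .
  have "ip \<Omega> p (\<lambda>_. 1) = integral\<^sup>L (lebesgue_on \<Omega>) (\<lambda>x. a * (p1 x * 1) + b * (p2 x * 1))"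
    unfolding ip_def pe by simp
  also have "\<dots> = a * ip \<Omega> p1 (\<lambda>_. 1) + b * ip \<Omega> p2 (\<lambda>_. 1)" unfolding ip_def by (rule int_lin[OF i])
  also have "\<dots> = 0" using p by (simp add: Pspace_def)
  finally show "Pspace \<Omega> p" unfolding Pspace_def using H1_lin(1)[OF bo op H eq] by blast
qed

lemma poly_le_lin:
  assumes "poly_le m P1" "poly_le m P2"
  shows "poly_le m (\<lambda>x. a * P1 x + b * P2 x)"
proof -
  obtain c1 where c1: "\<forall>x. P1 x = (\<Sum>\<alpha>\<in>multi_idx m. c1 \<alpha> * (\<Prod>i\<in>Basis. (x \<bullet> i) ^ \<alpha> i))"
    using assms(1) unfolding poly_le_def by blast
  obtain c2 where c2: "\<forall>x. P2 x = (\<Sum>\<alpha>\<in>multi_idx m. c2 \<alpha> * (\<Prod>i\<in>Basis. (x \<bullet> i) ^ \<alpha> i))"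
    using assms(2) unfolding poly_le_def by blast
  show ?thesis unfolding poly_le_def
  proof (intro exI allI)
    fix x :: 'a
    show "a * P1 x + b * P2 x = (\<Sum>\<alpha>\<in>multi_idx m. (a * c1 \<alpha> + b * c2 \<alpha>) * (\<Prod>i\<in>Basis. (x \<bullet> i) ^ \<alpha> i))"
      unfolding c1[rule_format] c2[rule_format]
      by (simp add: sum.distrib sum_distrib_left algebra_simps)
  qed
qed

lemma Sh_lin:
  assumes "Sh \<Omega> T m f1" "Sh \<Omega> T m f2" "\<forall>x. f x = a * f1 x + b * f2 x"
  shows "Sh \<Omega> T m f"
proof -
  have fe: "f = (\<lambda>x. a * f1 x + b * f2 x)" using assms(3) by (simp add: fun_eq_iff)
  have c: "continuous_on \<Omega> f" unfolding fe using assms(1,2) unfolding Sh_def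
    by (intro continuous_intros) auto
  have "\<exists>P. poly_le m P \<and> (\<forall>x\<in>e \<inter> \<Omega>. f x = P x)" if e: "e \<in> T" for e
  proof -
    obtain P1 where P1: "poly_le m P1" "\<forall>x\<in>e \<inter> \<Omega>. f1 x = P1 x" using assms(1) e unfolding Sh_def by blast
    obtain P2 where P2: "poly_le m P2" "\<forall>x\<in>e \<inter> \<Omega>. f2 x = P2 x" using assms(2) e unfolding Sh_def by blast
    show ?thesis using poly_le_lin[OF P1(1) P2(1)] P1(2) P2(2) unfolding fe by (intro exI[of _ "\<lambda>x. a * P1 x + b * P2 x"]) auto
  qed
  then show ?thesis using c unfolding Sh_def by blast
qed

lemma Uh_lin:
  assumes bo: "bounded \<Omega>" and op: "open \<Omega>" and cf: "coef \<Omega> lam B"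
    and v: "Uh \<Omega> lam T l v1" "Uh \<Omega> lam T l v2"
    and eq: "\<forall>x. v x = a *\<^sub>R v1 x + b *\<^sub>R v2 x"
  shows "Uh \<Omega> lam T l v"
proof -
  have U: "Uspace \<Omega> lam v1" "Uspace \<Omega> lam v2" using v by (auto simp: Uh_def)
  have "Sh \<Omega> T l (\<lambda>x. v x \<bullet> i)" if i: "i \<in> Basis" for i
  proof (rule Sh_lin)
    show "Sh \<Omega> T l (\<lambda>x. v1 x \<bullet> i)" "Sh \<Omega> T l (\<lambda>x. v2 x \<bullet> i)" using v i by (auto simp: Uh_def)
    show "\<forall>x. v x \<bullet> i = a * (v1 x \<bullet> i) + b * (v2 x \<bullet> i)" using eq by (simp add: inner_add_left)
  qed
  then show ?thesis unfolding Uh_def using U_lin(1)[OF bo op cf U eq] by blast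
qed

lemma Ph_lin:
  assumes bo: "bounded \<Omega>" and op: "open \<Omega>" and p: "Ph \<Omega> T k p1" "Ph \<Omega> T k p2"
    and eq: "\<forall>x. p x = a * p1 x + b * p2 x"
  shows "Ph \<Omega> T k p"
  using Sh_lin[of \<Omega> T k p1 p2 p a b] P_lin(1)[OF bo op _ _ eq] p eq unfolding Ph_def by blast

definition Bv :: "real \<Rightarrow> real \<Rightarrow> 'a::euclidean_space \<Rightarrow> real \<Rightarrow> ('a \<Rightarrow> 'a \<Rightarrow> real) \<Rightarrow> real \<Rightarrow> 'a
    \<Rightarrow> 'a \<Rightarrow> real \<Rightarrow> ('a \<Rightarrow> 'a \<Rightarrow> real) \<Rightarrow> real \<Rightarrow> 'a \<Rightarrow> real" where
  "Bv l k u D C p G v D' C' q G' = l * (u \<bullet> v) - D' * p - D * q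
     - 1/2 * (k * ((l *\<^sub>R u + G) \<bullet> (l *\<^sub>R v + G'))) + 1/2 * (l * D * D')
     + 1/2 * (k * ((\<Sum>i\<in>Basis. \<Sum>j\<in>Basis. C i j * C' i j) / 2))"

definition Nv :: "'a::euclidean_space \<Rightarrow> real \<Rightarrow> ('a \<Rightarrow> 'a \<Rightarrow> real) \<Rightarrow> 'a \<Rightarrow> real" where
  "Nv u D C G = u \<bullet> u + D * D + 1 * ((\<Sum>i\<in>Basis. \<Sum>j\<in>Basis. C i j * C i j) / 2) + G \<bullet> G"

lemma sum2_lin:
  fixes C C1 C2 E :: "'a::euclidean_space \<Rightarrow> 'a \<Rightarrow> real"
  assumes "\<forall>i\<in>(Basis::'a::euclidean_space set). \<forall>j\<in>Basis. C i j = a * C1 i j + b * C2 i j"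
  shows "(\<Sum>i\<in>(Basis::'a set). \<Sum>j\<in>Basis. C i j * E i j)
    = a * (\<Sum>i\<in>Basis. \<Sum>j\<in>Basis. C1 i j * E i j) + b * (\<Sum>i\<in>Basis. \<Sum>j\<in>Basis. C2 i j * E i j)"
proof -
  have "(\<Sum>i\<in>(Basis::'a set). \<Sum>j\<in>Basis. C i j * E i j) = (\<Sum>i\<in>(Basis::'a set). \<Sum>j\<in>Basis. a * (C1 i j * E i j) + b * (C2 i j * E i j))"
    using assms by (intro sum.cong refl) (simp add: distrib_right mult.assoc)
  also have "\<dots> = a * (\<Sum>i\<in>Basis. \<Sum>j\<in>Basis. C1 i j * E i j) + b * (\<Sum>i\<in>Basis. \<Sum>j\<in>Basis. C2 i j * E i j)"
    by (simp add: sum.distrib sum_distrib_left)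
  finally show ?thesis .
qed

lemma sum2_lin':
  fixes C C1 C2 E :: "'a::euclidean_space \<Rightarrow> 'a \<Rightarrow> real"
  assumes "\<forall>i\<in>(Basis::'a::euclidean_space set). \<forall>j\<in>Basis. C i j = a * C1 i j + b * C2 i j"
  shows "(\<Sum>i\<in>(Basis::'a set). \<Sum>j\<in>Basis. E i j * C i j)
    = a * (\<Sum>i\<in>Basis. \<Sum>j\<in>Basis. E i j * C1 i j) + b * (\<Sum>i\<in>Basis. \<Sum>j\<in>Basis. E i j * C2 i j)"
proof -
  have "(\<Sum>i\<in>(Basis::'a set). \<Sum>j\<in>Basis. E i j * C i j) = (\<Sum>i\<in>(Basis::'a set). \<Sum>j\<in>Basis. a * (E i j * C1 i j) + b * (E i j * C2 i j))"
    using assms by (intro sum.cong refl) (simp add: distrib_left mult.left_commute)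
  also have "\<dots> = a * (\<Sum>i\<in>Basis. \<Sum>j\<in>Basis. E i j * C1 i j) + b * (\<Sum>i\<in>Basis. \<Sum>j\<in>Basis. E i j * C2 i j)"
    by (simp add: sum.distrib sum_distrib_left)
  finally show ?thesis .
qed

lemma Bv_lin1:
  assumes "\<forall>i\<in>Basis. \<forall>j\<in>Basis. C i j = a * C1 i j + b * C2 i j"
  shows "Bv l k (a *\<^sub>R u1 + b *\<^sub>R u2) (a * D1 + b * D2) C (a * p1 + b * p2) (a *\<^sub>R G1 + b *\<^sub>R G2) v D' C' q G'
    = a * Bv l k u1 D1 C1 p1 G1 v D' C' q G' + b * Bv l k u2 D2 C2 p2 G2 v D' C' q G'"
  unfolding Bv_def sum2_lin[OF assms]
  by (simp add: algebra_simps inner_add_left)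

lemma Bv_lin2:
  assumes "\<forall>i\<in>Basis. \<forall>j\<in>Basis. C' i j = a * C1 i j + b * C2 i j"
  shows "Bv l k u D C p G (a *\<^sub>R v1 + b *\<^sub>R v2) (a * D1 + b * D2) C' (a * q1 + b * q2) (a *\<^sub>R G1 + b *\<^sub>R G2)
    = a * Bv l k u D C p G v1 D1 C1 q1 G1 + b * Bv l k u D C p G v2 D2 C2 q2 G2"
  unfolding Bv_def sum2_lin'[OF assms]
  by (simp add: algebra_simps inner_add_right)

lemma coerc_pt:
  assumes lk: "l * k = 1" and l: "m \<le> l" and k: "m' \<le> k"
  shows "1/2 * min m m' * Nv u D C G \<le> Bv l k u D C p G u D C (- p) (- G)"
proof -
  let ?S = "(\<Sum>i\<in>(Basis::'a set). \<Sum>j\<in>Basis. C i j * C i j)"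
  have S: "0 \<le> ?S" by (intro sum_nonneg) simp
  have uu: "0 \<le> u \<bullet> u" "0 \<le> G \<bullet> G" by simp_all
  have DD: "0 \<le> D * D" by simp
  have "(l *\<^sub>R u + G) \<bullet> (l *\<^sub>R u + - G) = l * l * (u \<bullet> u) - G \<bullet> G"
    by (simp add: algebra_simps inner_add_left inner_add_right inner_commute)
  then have "Bv l k u D C p G u D C (- p) (- G) = l * (u \<bullet> u) - 1/2 * (k * (l * l * (u \<bullet> u) - G \<bullet> G))
      + 1/2 * (l * D * D) + 1/2 * (k * (?S / 2))"
    unfolding Bv_def by simp
  also have "\<dots> = 1/2 * l * (u \<bullet> u) + 1/2 * k * (G \<bullet> G) + 1/2 * l * (D * D) + 1/2 * k * (?S / 2)"
  proof -
    have "k * (l * l * (u \<bullet> u)) = (l * k) * (l * (u \<bullet> u))" by (simp add: mult_ac)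
    then have "k * (l * l * (u \<bullet> u)) = l * (u \<bullet> u)" using lk by simp
    then have e2: "k * (l * l * (u \<bullet> u) - G \<bullet> G) = l * (u \<bullet> u) - k * (G \<bullet> G)"
      by (simp add: right_diff_distrib)
    show ?thesis unfolding e2 by (simp add: algebra_simps)
  qed
  finally have B: "Bv l k u D C p G u D C (- p) (- G) = 1/2 * l * (u \<bullet> u) + 1/2 * k * (G \<bullet> G) + 1/2 * l * (D * D) + 1/2 * k * (?S / 2)" .
  let ?a = "1/2 * min m m'"
  have a1: "?a \<le> 1/2 * l" "?a \<le> 1/2 * k" using l k by auto
  have "?a * (u \<bullet> u) \<le> 1/2 * l * (u \<bullet> u)" using a1 uu by (intro mult_right_mono) auto
  moreover have "?a * (G \<bullet> G) \<le> 1/2 * k * (G \<bullet> G)" using a1 uu by (intro mult_right_mono) auto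
  moreover have "?a * (D * D) \<le> 1/2 * l * (D * D)" using a1 DD by (intro mult_right_mono) auto
  moreover have "?a * (?S / 2) \<le> 1/2 * k * (?S / 2)" using a1 S by (intro mult_right_mono) auto
  ultimately show ?thesis unfolding B Nv_def by (simp add: algebra_simps)
qed

definition Bx :: "'a::euclidean_space set \<Rightarrow> ('a \<Rightarrow> real) \<Rightarrow> ('a \<Rightarrow> real) \<Rightarrow> ('a \<Rightarrow> 'a) \<Rightarrow> ('a \<Rightarrow> real)
   \<Rightarrow> ('a \<Rightarrow> 'a) \<Rightarrow> ('a \<Rightarrow> real) \<Rightarrow> 'a \<Rightarrow> real" where
  "Bx \<Omega> lam kap u p v q x = Bv (lam x) (kap x) (u x) (wdiv \<Omega> u x) (wcurl \<Omega> (\<lambda>x. lam x *\<^sub>R u x) x) (p x) (wgrad \<Omega> p x)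
     (v x) (wdiv \<Omega> v x) (wcurl \<Omega> (\<lambda>x. lam x *\<^sub>R v x) x) (q x) (wgrad \<Omega> q x)"

definition Nx :: "'a::euclidean_space set \<Rightarrow> ('a \<Rightarrow> real) \<Rightarrow> ('a \<Rightarrow> 'a) \<Rightarrow> ('a \<Rightarrow> real) \<Rightarrow> 'a \<Rightarrow> real" where
  "Nx \<Omega> lam u p x = Nv (u x) (wdiv \<Omega> u x) (wcurl \<Omega> (\<lambda>x. lam x *\<^sub>R u x) x) (wgrad \<Omega> p x)"

lemma P_H1: "Pspace \<Omega> p \<Longrightarrow> H1 \<Omega> p" by (simp add: Pspace_def)

lemma L2v_add: "L2v \<Omega> u \<Longrightarrow> L2v \<Omega> v \<Longrightarrow> L2v \<Omega> (\<lambda>x. u x + v x)"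
  using L2v_lin[of \<Omega> u v 1 1] by simp

lemma curl_sum_int:
  assumes "Uspace \<Omega> lam u" "Uspace \<Omega> lam v"
  shows "integrable (lebesgue_on \<Omega>) (\<lambda>x. (\<Sum>i\<in>Basis. \<Sum>j\<in>Basis. wcurl \<Omega> (\<lambda>x. lam x *\<^sub>R u x) x i j * wcurl \<Omega> (\<lambda>x. lam x *\<^sub>R v x) x i j) / 2)"
proof -
  have "integrable (lebesgue_on \<Omega>) (\<lambda>x. (\<Sum>i\<in>Basis. \<Sum>j\<in>Basis. wcurl \<Omega> (\<lambda>x. lam x *\<^sub>R u x) x i j * wcurl \<Omega> (\<lambda>x. lam x *\<^sub>R v x) x i j))"
    by (intro Bochner_Integration.integrable_sum L2_mult U_curl_L2[OF assms(1)] U_curl_L2[OF assms(2)])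
  then show ?thesis by simp
qed

lemma B_int:
  assumes bo: "bounded \<Omega>" and op: "open \<Omega>" and cl: "coef \<Omega> lam Bl" and ck: "coef \<Omega> kap Bk"
    and u: "Uspace \<Omega> lam u" and p: "Pspace \<Omega> p" and v: "Uspace \<Omega> lam v" and q: "Pspace \<Omega> q"
  shows "integrable (lebesgue_on \<Omega>) (Bx \<Omega> lam kap u p v q)"
    "B_CGLS \<Omega> lam kap u p v q = integral\<^sup>L (lebesgue_on \<Omega>) (Bx \<Omega> lam kap u p v q)"
proof -
  have lm: "lam \<in> borel_measurable (lebesgue_on \<Omega>)" "\<forall>x\<in>\<Omega>. \<bar>lam x\<bar> \<le> Bl" using cl by (auto simp: coef_def)
  have km: "kap \<in> borel_measurable (lebesgue_on \<Omega>)" "\<forall>x\<in>\<Omega>. \<bar>kap x\<bar> \<le> Bk" using ck by (auto simp: coef_def)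
  define Cu where "Cu = wcurl \<Omega> (\<lambda>x. lam x *\<^sub>R u x)"
  define Cv where "Cv = wcurl \<Omega> (\<lambda>x. lam x *\<^sub>R v x)"
  define f1 where "f1 x = lam x * (u x \<bullet> v x)" for x
  define f2 where "f2 x = wdiv \<Omega> v x * p x" for x
  define f3 where "f3 x = wdiv \<Omega> u x * q x" for x
  define f4 where "f4 x = kap x * ((lam x *\<^sub>R u x + wgrad \<Omega> p x) \<bullet> (lam x *\<^sub>R v x + wgrad \<Omega> q x))" for x
  define f5 where "f5 x = lam x * wdiv \<Omega> u x * wdiv \<Omega> v x" for x
  define f6 where "f6 x = kap x * ((\<Sum>i\<in>Basis. \<Sum>j\<in>Basis. Cu x i j * Cv x i j) / 2)" for x
  have i1: "integrable (lebesgue_on \<Omega>) f1"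
    unfolding f1_def[abs_def] by (rule bdd_mult_int[OF L2v_inner[OF U_L2v[OF u] U_L2v[OF v]] lm])
  have i2: "integrable (lebesgue_on \<Omega>) f2"
    unfolding f2_def[abs_def] by (rule L2_mult[OF U_div_L2[OF v] H1_L2[OF P_H1[OF p]]])
  have i3: "integrable (lebesgue_on \<Omega>) f3"
    unfolding f3_def[abs_def] by (rule L2_mult[OF U_div_L2[OF u] H1_L2[OF P_H1[OF q]]])
  have X: "L2v \<Omega> (\<lambda>x. lam x *\<^sub>R u x + wgrad \<Omega> p x)"
    by (rule L2v_add[OF L2v_bdd[OF U_L2v[OF u] lm] wgrad_L2v[OF P_H1[OF p]]])
  have Y: "L2v \<Omega> (\<lambda>x. lam x *\<^sub>R v x + wgrad \<Omega> q x)"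
    by (rule L2v_add[OF L2v_bdd[OF U_L2v[OF v] lm] wgrad_L2v[OF P_H1[OF q]]])
  have i4: "integrable (lebesgue_on \<Omega>) f4"
    unfolding f4_def[abs_def] by (rule bdd_mult_int[OF L2v_inner[OF X Y] km])
  have i5: "integrable (lebesgue_on \<Omega>) f5"
    unfolding f5_def[abs_def] by (rule L2_mult[OF L2_bdd[OF U_div_L2[OF u] lm] U_div_L2[OF v]])
  have i6: "integrable (lebesgue_on \<Omega>) f6"
    unfolding f6_def[abs_def] Cu_def Cv_def by (rule bdd_mult_int[OF curl_sum_int[OF u v] km])
  have Be: "Bx \<Omega> lam kap u p v q = (\<lambda>x. f1 x - f2 x - f3 x - 1/2 * f4 x + 1/2 * f5 x + 1/2 * f6 x)"
    unfolding Bx_def[abs_def] Bv_def f1_def f2_def f3_def f4_def f5_def f6_def Cu_def Cv_def by simp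
  show "integrable (lebesgue_on \<Omega>) (Bx \<Omega> lam kap u p v q)" unfolding Be
    using i1 i2 i3 i4 i5 i6 by (intro Bochner_Integration.integrable_add Bochner_Integration.integrable_diff integrable_mult_right)
  have e1: "ipv \<Omega> (\<lambda>x. lam x *\<^sub>R u x) v = integral\<^sup>L (lebesgue_on \<Omega>) f1" unfolding ipv_def f1_def by simp
  have e2: "ip \<Omega> (wdiv \<Omega> v) p = integral\<^sup>L (lebesgue_on \<Omega>) f2" unfolding ip_def f2_def by simp
  have e3: "ip \<Omega> (wdiv \<Omega> u) q = integral\<^sup>L (lebesgue_on \<Omega>) f3" unfolding ip_def f3_def by simp
  have e4: "ipv \<Omega> (\<lambda>x. kap x *\<^sub>R (lam x *\<^sub>R u x + wgrad \<Omega> p x)) (\<lambda>x. lam x *\<^sub>R v x + wgrad \<Omega> q x) = integral\<^sup>L (lebesgue_on \<Omega>) f4"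
    unfolding ipv_def f4_def by simp
  have e5: "ip \<Omega> (\<lambda>x. lam x * wdiv \<Omega> u x) (wdiv \<Omega> v) = integral\<^sup>L (lebesgue_on \<Omega>) f5" unfolding ip_def f5_def by simp
  have e6: "curl_ip \<Omega> kap Cu Cv = integral\<^sup>L (lebesgue_on \<Omega>) f6" unfolding curl_ip_def f6_def by simp
  have "integral\<^sup>L (lebesgue_on \<Omega>) (\<lambda>x. f1 x - f2 x - f3 x - 1/2 * f4 x + 1/2 * f5 x + 1/2 * f6 x)
     = integral\<^sup>L (lebesgue_on \<Omega>) f1 - integral\<^sup>L (lebesgue_on \<Omega>) f2 - integral\<^sup>L (lebesgue_on \<Omega>) f3
       - 1/2 * integral\<^sup>L (lebesgue_on \<Omega>) f4 + 1/2 * integral\<^sup>L (lebesgue_on \<Omega>) f5 + 1/2 * integral\<^sup>L (lebesgue_on \<Omega>) f6"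
    using i1 i2 i3 i4 i5 i6 by simp
  then show "B_CGLS \<Omega> lam kap u p v q = integral\<^sup>L (lebesgue_on \<Omega>) (Bx \<Omega> lam kap u p v q)"
    unfolding Be B_CGLS_def e1 e2 e3 e4 e5 Cu_def[symmetric] Cv_def[symmetric] e6 by simp
qed

lemma N_int:
  assumes bo: "bounded \<Omega>" and op: "open \<Omega>" and u: "Uspace \<Omega> lam u" and p: "Pspace \<Omega> p"
  shows "integrable (lebesgue_on \<Omega>) (Nx \<Omega> lam u p)"
    "normUP \<Omega> lam u p = sqrt (integral\<^sup>L (lebesgue_on \<Omega>) (Nx \<Omega> lam u p))"
    "0 \<le> integral\<^sup>L (lebesgue_on \<Omega>) (Nx \<Omega> lam u p)"
proof -
  define C where "C = wcurl \<Omega> (\<lambda>x. lam x *\<^sub>R u x)"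
  define f1 where "f1 x = u x \<bullet> u x" for x
  define f2 where "f2 x = wdiv \<Omega> u x * wdiv \<Omega> u x" for x
  define f3 where "f3 x = 1 * ((\<Sum>i\<in>Basis. \<Sum>j\<in>Basis. C x i j * C x i j) / 2)" for x
  define f4 where "f4 x = wgrad \<Omega> p x \<bullet> wgrad \<Omega> p x" for x
  have i1: "integrable (lebesgue_on \<Omega>) f1" unfolding f1_def[abs_def] by (rule L2v_inner[OF U_L2v[OF u] U_L2v[OF u]])
  have i2: "integrable (lebesgue_on \<Omega>) f2" unfolding f2_def[abs_def] by (rule L2_mult[OF U_div_L2[OF u] U_div_L2[OF u]])
  have i3: "integrable (lebesgue_on \<Omega>) f3" unfolding f3_def[abs_def] C_def using curl_sum_int[OF u u] by simp
  have i4: "integrable (lebesgue_on \<Omega>) f4" unfolding f4_def[abs_def]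
    by (rule L2v_inner[OF wgrad_L2v[OF P_H1[OF p]] wgrad_L2v[OF P_H1[OF p]]])
  have Ne: "Nx \<Omega> lam u p = (\<lambda>x. f1 x + f2 x + f3 x + f4 x)"
    unfolding Nx_def[abs_def] Nv_def f1_def f2_def f3_def f4_def C_def by simp
  show "integrable (lebesgue_on \<Omega>) (Nx \<Omega> lam u p)" unfolding Ne using i1 i2 i3 i4 by simp
  have "integral\<^sup>L (lebesgue_on \<Omega>) (\<lambda>x. f1 x + f2 x + f3 x + f4 x)
     = integral\<^sup>L (lebesgue_on \<Omega>) f1 + integral\<^sup>L (lebesgue_on \<Omega>) f2 + integral\<^sup>L (lebesgue_on \<Omega>) f3 + integral\<^sup>L (lebesgue_on \<Omega>) f4"
    using i1 i2 i3 i4 by simp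
  moreover have "curl_ip \<Omega> (\<lambda>_. 1) C C = integral\<^sup>L (lebesgue_on \<Omega>) f3" unfolding curl_ip_def f3_def ..
  ultimately show "normUP \<Omega> lam u p = sqrt (integral\<^sup>L (lebesgue_on \<Omega>) (Nx \<Omega> lam u p))"
    unfolding Ne normUP_def C_def[symmetric] ipv_def ip_def f1_def f2_def f4_def by simp
  have "0 \<le> Nx \<Omega> lam u p x" for x
  proof -
    have "0 \<le> (\<Sum>i\<in>(Basis::'a set). \<Sum>j\<in>Basis. C x i j * C x i j)" by (intro sum_nonneg) simp
    then show ?thesis unfolding Nx_def Nv_def C_def[symmetric] by simp
  qed
  then show "0 \<le> integral\<^sup>L (lebesgue_on \<Omega>) (Nx \<Omega> lam u p)" by simp
qed

lemma B_lin2: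
  assumes bo: "bounded \<Omega>" and op: "open \<Omega>" and cl: "coef \<Omega> lam Bl" and ck: "coef \<Omega> kap Bk"
    and u: "Uspace \<Omega> lam u" and p: "Pspace \<Omega> p"
    and v: "Uspace \<Omega> lam v1" "Uspace \<Omega> lam v2" and q: "Pspace \<Omega> q1" "Pspace \<Omega> q2"
    and ev: "\<forall>x. v x = a *\<^sub>R v1 x + b *\<^sub>R v2 x" and eq: "\<forall>x. q x = a * q1 x + b * q2 x"
  shows "B_CGLS \<Omega> lam kap u p v q = a * B_CGLS \<Omega> lam kap u p v1 q1 + b * B_CGLS \<Omega> lam kap u p v2 q2"
proof -
  have V: "Uspace \<Omega> lam v" by (rule U_lin(1)[OF bo op cl v ev])
  have Q: "Pspace \<Omega> q" by (rule P_lin(1)[OF bo op q eq])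
  have ad: "AE x in lebesgue_on \<Omega>. wdiv \<Omega> v x = a * wdiv \<Omega> v1 x + b * wdiv \<Omega> v2 x" by (rule U_lin(2)[OF bo op cl v ev])
  have ac: "AE x in lebesgue_on \<Omega>. \<forall>i\<in>Basis. \<forall>j\<in>Basis. wcurl \<Omega> (\<lambda>x. lam x *\<^sub>R v x) x i j =
        a * wcurl \<Omega> (\<lambda>x. lam x *\<^sub>R v1 x) x i j + b * wcurl \<Omega> (\<lambda>x. lam x *\<^sub>R v2 x) x i j"
    by (rule U_lin(3)[OF bo op cl v ev])
  have ag: "AE x in lebesgue_on \<Omega>. wgrad \<Omega> q x = a *\<^sub>R wgrad \<Omega> q1 x + b *\<^sub>R wgrad \<Omega> q2 x" by (rule P_lin(2)[OF bo op q eq])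
  have i0: "integrable (lebesgue_on \<Omega>) (Bx \<Omega> lam kap u p v q)" by (rule B_int(1)[OF bo op cl ck u p V Q])
  have i1: "integrable (lebesgue_on \<Omega>) (Bx \<Omega> lam kap u p v1 q1)" by (rule B_int(1)[OF bo op cl ck u p v(1) q(1)])
  have i2: "integrable (lebesgue_on \<Omega>) (Bx \<Omega> lam kap u p v2 q2)" by (rule B_int(1)[OF bo op cl ck u p v(2) q(2)])
  have "integral\<^sup>L (lebesgue_on \<Omega>) (Bx \<Omega> lam kap u p v q)
      = integral\<^sup>L (lebesgue_on \<Omega>) (\<lambda>x. a * Bx \<Omega> lam kap u p v1 q1 x + b * Bx \<Omega> lam kap u p v2 q2 x)"
  proof (rule integral_cong_AE)
    show "Bx \<Omega> lam kap u p v q \<in> borel_measurable (lebesgue_on \<Omega>)" using i0 by (rule borel_measurable_integrable)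
    show "(\<lambda>x. a * Bx \<Omega> lam kap u p v1 q1 x + b * Bx \<Omega> lam kap u p v2 q2 x) \<in> borel_measurable (lebesgue_on \<Omega>)"
      using i1 i2 by (intro borel_measurable_integrable Bochner_Integration.integrable_add integrable_mult_right)
    show "AE x in lebesgue_on \<Omega>. Bx \<Omega> lam kap u p v q x = a * Bx \<Omega> lam kap u p v1 q1 x + b * Bx \<Omega> lam kap u p v2 q2 x"
      using ad ac ag
    proof eventually_elim
      case (elim x)
      show ?case unfolding Bx_def ev[rule_format, of x] eq[rule_format, of x] elim(1) elim(3)
        by (rule Bv_lin2[OF elim(2)])
    qed
  qed
  also have "\<dots> = a * integral\<^sup>L (lebesgue_on \<Omega>) (Bx \<Omega> lam kap u p v1 q1) + b * integral\<^sup>L (lebesgue_on \<Omega>) (Bx \<Omega> lam kap u p v2 q2)"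
    by (rule int_lin[OF i1 i2])
  finally show ?thesis
    using B_int(2)[OF bo op cl ck u p V Q] B_int(2)[OF bo op cl ck u p v(1) q(1)] B_int(2)[OF bo op cl ck u p v(2) q(2)]
    by simp
qed

lemma B_lin1:
  assumes bo: "bounded \<Omega>" and op: "open \<Omega>" and cl: "coef \<Omega> lam Bl" and ck: "coef \<Omega> kap Bk"
    and v: "Uspace \<Omega> lam v" and q: "Pspace \<Omega> q"
    and u: "Uspace \<Omega> lam u1" "Uspace \<Omega> lam u2" and p: "Pspace \<Omega> p1" "Pspace \<Omega> p2"
    and eu: "\<forall>x. u x = a *\<^sub>R u1 x + b *\<^sub>R u2 x" and ep: "\<forall>x. p x = a * p1 x + b * p2 x"
  shows "B_CGLS \<Omega> lam kap u p v q = a * B_CGLS \<Omega> lam kap u1 p1 v q + b * B_CGLS \<Omega> lam kap u2 p2 v q"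
proof -
  have U: "Uspace \<Omega> lam u" by (rule U_lin(1)[OF bo op cl u eu])
  have P: "Pspace \<Omega> p" by (rule P_lin(1)[OF bo op p ep])
  have ad: "AE x in lebesgue_on \<Omega>. wdiv \<Omega> u x = a * wdiv \<Omega> u1 x + b * wdiv \<Omega> u2 x" by (rule U_lin(2)[OF bo op cl u eu])
  have ac: "AE x in lebesgue_on \<Omega>. \<forall>i\<in>Basis. \<forall>j\<in>Basis. wcurl \<Omega> (\<lambda>x. lam x *\<^sub>R u x) x i j =
        a * wcurl \<Omega> (\<lambda>x. lam x *\<^sub>R u1 x) x i j + b * wcurl \<Omega> (\<lambda>x. lam x *\<^sub>R u2 x) x i j"
    by (rule U_lin(3)[OF bo op cl u eu])
  have ag: "AE x in lebesgue_on \<Omega>. wgrad \<Omega> p x = a *\<^sub>R wgrad \<Omega> p1 x + b *\<^sub>R wgrad \<Omega> p2 x" by (rule P_lin(2)[OF bo op p ep])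
  have i0: "integrable (lebesgue_on \<Omega>) (Bx \<Omega> lam kap u p v q)" by (rule B_int(1)[OF bo op cl ck U P v q])
  have i1: "integrable (lebesgue_on \<Omega>) (Bx \<Omega> lam kap u1 p1 v q)" by (rule B_int(1)[OF bo op cl ck u(1) p(1) v q])
  have i2: "integrable (lebesgue_on \<Omega>) (Bx \<Omega> lam kap u2 p2 v q)" by (rule B_int(1)[OF bo op cl ck u(2) p(2) v q])
  have "integral\<^sup>L (lebesgue_on \<Omega>) (Bx \<Omega> lam kap u p v q)
      = integral\<^sup>L (lebesgue_on \<Omega>) (\<lambda>x. a * Bx \<Omega> lam kap u1 p1 v q x + b * Bx \<Omega> lam kap u2 p2 v q x)"
  proof (rule integral_cong_AE)
    show "Bx \<Omega> lam kap u p v q \<in> borel_measurable (lebesgue_on \<Omega>)" using i0 by (rule borel_measurable_integrable)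
    show "(\<lambda>x. a * Bx \<Omega> lam kap u1 p1 v q x + b * Bx \<Omega> lam kap u2 p2 v q x) \<in> borel_measurable (lebesgue_on \<Omega>)"
      using i1 i2 by (intro borel_measurable_integrable Bochner_Integration.integrable_add integrable_mult_right)
    show "AE x in lebesgue_on \<Omega>. Bx \<Omega> lam kap u p v q x = a * Bx \<Omega> lam kap u1 p1 v q x + b * Bx \<Omega> lam kap u2 p2 v q x"
      using ad ac ag
    proof eventually_elim
      case (elim x)
      show ?case unfolding Bx_def eu[rule_format, of x] ep[rule_format, of x] elim(1) elim(3)
        by (rule Bv_lin1[OF elim(2)])
    qed
  qed
  also have "\<dots> = a * integral\<^sup>L (lebesgue_on \<Omega>) (Bx \<Omega> lam kap u1 p1 v q) + b * integral\<^sup>L (lebesgue_on \<Omega>) (Bx \<Omega> lam kap u2 p2 v q)"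
    by (rule int_lin[OF i1 i2])
  finally show ?thesis
    using B_int(2)[OF bo op cl ck U P v q] B_int(2)[OF bo op cl ck u(1) p(1) v q] B_int(2)[OF bo op cl ck u(2) p(2) v q]
    by simp
qed

theorem lemma3p6:
  fixes \<Omega> :: "'a::euclidean_space set"
    and lam kap f p ph :: "'a \<Rightarrow> real"
    and u uh :: "'a \<Rightarrow> 'a"
    and kmin kmax lmin lmax M h :: real
    and T :: "'a set set"
    and l k :: nat
  assumes dim: "DIM('a) = 2 \<or> DIM('a) = 3"
    and dom: "bounded \<Omega>" "open \<Omega>" "connected \<Omega>" "lipschitz_boundary \<Omega>"
    and kap_def: "\<forall>x\<in>\<Omega>. kap x = 1 / lam x"
    and lam_C1: "C1_on \<Omega> lam"
    and bnds: "0 < kmin" "kmin \<le> kmax" "0 < lmin" "lmin \<le> lmax"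
    and kap_bd: "\<forall>x\<in>\<Omega>. kmin \<le> kap x \<and> kap x \<le> kmax"
    and lam_bd: "\<forall>x\<in>\<Omega>. lmin \<le> lam x \<and> lam x \<le> lmax"
    and f: "L2 \<Omega> f" "integral\<^sup>L (lebesgue_on \<Omega>) f = 0"
    and M: "0 < M"
    and cont: "\<forall>u' p' v' q'. Uspace \<Omega> lam u' \<and> Pspace \<Omega> p' \<and> Uspace \<Omega> lam v' \<and> Pspace \<Omega> q' \<longrightarrow>
        \<bar>B_CGLS \<Omega> lam kap u' p' v' q'\<bar> \<le> M * normUP \<Omega> lam u' p' * normUP \<Omega> lam v' q'"
    and mesh: "is_partition \<Omega> T h" "1 \<le> l" "1 \<le> k"
    and sol: "Uspace \<Omega> lam u" "Pspace \<Omega> p"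
      "\<forall>v q. Uspace \<Omega> lam v \<and> Pspace \<Omega> q \<longrightarrow> B_CGLS \<Omega> lam kap u p v q = F_CGLS \<Omega> lam f v q"
    and solh: "Uh \<Omega> lam T l uh" "Ph \<Omega> T k ph"
      "\<forall>vh qh. Uh \<Omega> lam T l vh \<and> Ph \<Omega> T k qh \<longrightarrow> B_CGLS \<Omega> lam kap uh ph vh qh = F_CGLS \<Omega> lam f vh qh"
  shows "\<forall>vh qh. Uh \<Omega> lam T l vh \<and> Ph \<Omega> T k qh \<longrightarrow>
    normUP \<Omega> lam (\<lambda>x. u x - uh x) (\<lambda>x. p x - ph x)
      \<le> M / (1/2 * min lmin kmin) * normUP \<Omega> lam (\<lambda>x. u x - vh x) (\<lambda>x. p x - qh x)"
proof (intro allI impI)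
  fix vh qh assume vq: "Uh \<Omega> lam T l vh \<and> Ph \<Omega> T k qh"
  have Uvh: "Uh \<Omega> lam T l vh" and Pqh: "Ph \<Omega> T k qh" using vq by auto
  have bo: "bounded \<Omega>" and op: "open \<Omega>" using dom by auto
  have lcont: "continuous_on \<Omega> lam"
    unfolding continuous_on_eq_continuous_within
  proof
    fix x assume "x \<in> \<Omega>"
    then have "lam differentiable at x" using lam_C1 unfolding C1_on_def by blast
    then have "continuous (at x) lam" by (rule differentiable_imp_continuous_within)
    then show "continuous (at x within \<Omega>) lam" by (rule continuous_at_imp_continuous_at_within)
  qed
  have Om: "\<Omega> \<in> sets lebesgue" by (rule open_sets_lebesgue[OF op])
  have lmeas: "lam \<in> borel_measurable (lebesgue_on \<Omega>)"
    by (rule continuous_imp_measurable_on_sets_lebesgue[OF lcont Om])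
  have lpos: "\<forall>x\<in>\<Omega>. 0 < lam x" using lam_bd bnds by force
  have cl: "coef \<Omega> lam lmax" unfolding coef_def using lmeas lam_bd bnds by force
  have "(\<lambda>x. 1 / lam x) \<in> borel_measurable (lebesgue_on \<Omega>)"
    using lmeas by (intro borel_measurable_divide borel_measurable_const)
  moreover have "\<And>x. x \<in> space (lebesgue_on \<Omega>) \<Longrightarrow> 1 / lam x = kap x" using kap_def by simp
  ultimately have kmeas: "kap \<in> borel_measurable (lebesgue_on \<Omega>)" using measurable_cong by metis
  have ck: "coef \<Omega> kap kmax" unfolding coef_def using kmeas kap_bd bnds by force
  have lk: "\<forall>x\<in>\<Omega>. lam x * kap x = 1" using kap_def lpos by (simp add: less_imp_neq[symmetric])
  have Uu: "Uspace \<Omega> lam u" and Pp: "Pspace \<Omega> p" using sol by auto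
  have Uuh: "Uspace \<Omega> lam uh" using solh(1) by (simp add: Uh_def)
  have Pph: "Pspace \<Omega> ph" using solh(2) by (simp add: Ph_def)
  have Uvh': "Uspace \<Omega> lam vh" using Uvh by (simp add: Uh_def)
  have Pqh': "Pspace \<Omega> qh" using Pqh by (simp add: Ph_def)
  let ?eu = "\<lambda>x. u x - uh x"
  let ?ep = "\<lambda>x. p x - ph x"
  let ?ep' = "\<lambda>x. ph x - p x"
  let ?Yu = "\<lambda>x. u x - vh x"
  let ?Yp = "\<lambda>x. qh x - p x"
  let ?Zu = "\<lambda>x. vh x - uh x"
  let ?Zp = "\<lambda>x. ph x - qh x"
  let ?Wp = "\<lambda>x. p x - qh x"
  let ?M = "lebesgue_on \<Omega>"
  have Ue: "Uspace \<Omega> lam ?eu" by (rule U_lin(1)[OF bo op cl Uu Uuh, of _ 1 "-1"]) simp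
  have UY: "Uspace \<Omega> lam ?Yu" by (rule U_lin(1)[OF bo op cl Uu Uvh', of _ 1 "-1"]) simp
  have UZ: "Uspace \<Omega> lam ?Zu" by (rule U_lin(1)[OF bo op cl Uvh' Uuh, of _ 1 "-1"]) simp
  have Pe: "Pspace \<Omega> ?ep" by (rule P_lin(1)[OF bo op Pp Pph, of _ 1 "-1"]) simp
  have Pe': "Pspace \<Omega> ?ep'" by (rule P_lin(1)[OF bo op Pp Pph, of _ "-1" 1]) simp
  have PY: "Pspace \<Omega> ?Yp" by (rule P_lin(1)[OF bo op Pp Pqh', of _ "-1" 1]) simp
  have PZ: "Pspace \<Omega> ?Zp" by (rule P_lin(1)[OF bo op Pph Pqh', of _ 1 "-1"]) simp
  have PW: "Pspace \<Omega> ?Wp" by (rule P_lin(1)[OF bo op Pp Pqh', of _ 1 "-1"]) simp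
  have ge: "AE x in ?M. wgrad \<Omega> ?ep x = 1 *\<^sub>R wgrad \<Omega> p x + (-1) *\<^sub>R wgrad \<Omega> ph x"
    by (rule P_lin(2)[OF bo op Pp Pph]) simp
  have ge': "AE x in ?M. wgrad \<Omega> ?ep' x = (-1) *\<^sub>R wgrad \<Omega> p x + 1 *\<^sub>R wgrad \<Omega> ph x"
    by (rule P_lin(2)[OF bo op Pp Pph]) simp
  have gY: "AE x in ?M. wgrad \<Omega> ?Yp x = (-1) *\<^sub>R wgrad \<Omega> p x + 1 *\<^sub>R wgrad \<Omega> qh x"
    by (rule P_lin(2)[OF bo op Pp Pqh']) simp
  have gW: "AE x in ?M. wgrad \<Omega> ?Wp x = 1 *\<^sub>R wgrad \<Omega> p x + (-1) *\<^sub>R wgrad \<Omega> qh x"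
    by (rule P_lin(2)[OF bo op Pp Pqh']) simp
  define \<alpha> where "\<alpha> = 1/2 * min lmin kmin"
  have apos: "0 < \<alpha>" unfolding \<alpha>_def using bnds by simp
  have iN: "integrable ?M (Nx \<Omega> lam ?eu ?ep)" by (rule N_int(1)[OF bo op Ue Pe])
  have iB: "integrable ?M (Bx \<Omega> lam kap ?eu ?ep ?eu ?ep')" by (rule B_int(1)[OF bo op cl ck Ue Pe Ue Pe'])
  have "integral\<^sup>L ?M (\<lambda>x. \<alpha> * Nx \<Omega> lam ?eu ?ep x) \<le> integral\<^sup>L ?M (Bx \<Omega> lam kap ?eu ?ep ?eu ?ep')"
  proof (rule integral_mono_AE)
    show "integrable ?M (\<lambda>x. \<alpha> * Nx \<Omega> lam ?eu ?ep x)" using iN by (rule integrable_mult_right)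
    show "integrable ?M (Bx \<Omega> lam kap ?eu ?ep ?eu ?ep')" by (rule iB)
    show "AE x in ?M. \<alpha> * Nx \<Omega> lam ?eu ?ep x \<le> Bx \<Omega> lam kap ?eu ?ep ?eu ?ep' x"
      using ge ge' AE_space[of ?M]
    proof eventually_elim
      case (elim x)
      have x: "x \<in> \<Omega>" using elim(3) by simp
      have g1: "wgrad \<Omega> ?ep x = wgrad \<Omega> p x - wgrad \<Omega> ph x" using elim(1) by simp
      have g2: "wgrad \<Omega> ?ep' x = wgrad \<Omega> ph x - wgrad \<Omega> p x" using elim(2) by simp
      have g: "wgrad \<Omega> ?ep' x = - wgrad \<Omega> ?ep x" unfolding g1 g2 by simp
      have pe: "ph x - p x = - (p x - ph x)" by simp
      have h1: "lam x * kap x = 1" using lk x by blast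
      have h2: "lmin \<le> lam x" using lam_bd x by blast
      have h3: "kmin \<le> kap x" using kap_bd x by blast
      have "1/2 * min lmin kmin * Nv (?eu x) (wdiv \<Omega> ?eu x) (wcurl \<Omega> (\<lambda>x. lam x *\<^sub>R ?eu x) x) (wgrad \<Omega> ?ep x)
          \<le> Bv (lam x) (kap x) (?eu x) (wdiv \<Omega> ?eu x) (wcurl \<Omega> (\<lambda>x. lam x *\<^sub>R ?eu x) x) (?ep x) (wgrad \<Omega> ?ep x)
               (?eu x) (wdiv \<Omega> ?eu x) (wcurl \<Omega> (\<lambda>x. lam x *\<^sub>R ?eu x) x) (- ?ep x) (- wgrad \<Omega> ?ep x)"
        by (rule coerc_pt[OF h1 h2 h3])
      then show ?case unfolding Nx_def Bx_def \<alpha>_def g pe .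
    qed
  qed
  then have A: "\<alpha> * integral\<^sup>L ?M (Nx \<Omega> lam ?eu ?ep) \<le> B_CGLS \<Omega> lam kap ?eu ?ep ?eu ?ep'"
    using B_int(2)[OF bo op cl ck Ue Pe Ue Pe'] by simp
  have Bs: "B_CGLS \<Omega> lam kap ?eu ?ep ?eu ?ep' = 1 * B_CGLS \<Omega> lam kap ?eu ?ep ?Yu ?Yp + 1 * B_CGLS \<Omega> lam kap ?eu ?ep ?Zu ?Zp"
    by (rule B_lin2[OF bo op cl ck Ue Pe UY UZ PY PZ]) (simp_all add: algebra_simps)
  \<comment> \<open>Step C: Galerkin orthogonality\<close>
  have UhZ: "Uh \<Omega> lam T l ?Zu" by (rule Uh_lin[OF bo op cl Uvh solh(1), of _ 1 "-1"]) simp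
  have PhZ: "Ph \<Omega> T k ?Zp" by (rule Ph_lin[OF bo op solh(2) Pqh, of _ 1 "-1"]) simp
  have "B_CGLS \<Omega> lam kap ?eu ?ep ?Zu ?Zp = 1 * B_CGLS \<Omega> lam kap u p ?Zu ?Zp + (-1) * B_CGLS \<Omega> lam kap uh ph ?Zu ?Zp"
    by (rule B_lin1[OF bo op cl ck UZ PZ Uu Uuh Pp Pph]) simp_all
  also have "\<dots> = 0" using sol(3) solh(3) UZ PZ UhZ PhZ by simp
  finally have C: "B_CGLS \<Omega> lam kap ?eu ?ep ?Zu ?Zp = 0" .
  have D: "B_CGLS \<Omega> lam kap ?eu ?ep ?Yu ?Yp \<le> M * normUP \<Omega> lam ?eu ?ep * normUP \<Omega> lam ?Yu ?Yp"
    using cont Ue Pe UY PY by fastforce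
  \<comment> \<open>Step E: sign of the pressure argument\<close>
  have iNY: "integrable ?M (Nx \<Omega> lam ?Yu ?Yp)" by (rule N_int(1)[OF bo op UY PY])
  have iNW: "integrable ?M (Nx \<Omega> lam ?Yu ?Wp)" by (rule N_int(1)[OF bo op UY PW])
  have "integral\<^sup>L ?M (Nx \<Omega> lam ?Yu ?Yp) = integral\<^sup>L ?M (Nx \<Omega> lam ?Yu ?Wp)"
  proof (rule integral_cong_AE)
    show "Nx \<Omega> lam ?Yu ?Yp \<in> borel_measurable ?M" using iNY by (rule borel_measurable_integrable)
    show "Nx \<Omega> lam ?Yu ?Wp \<in> borel_measurable ?M" using iNW by (rule borel_measurable_integrable)
    show "AE x in ?M. Nx \<Omega> lam ?Yu ?Yp x = Nx \<Omega> lam ?Yu ?Wp x"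
      using gY gW
    proof eventually_elim
      case (elim x)
      have g1: "wgrad \<Omega> ?Yp x = wgrad \<Omega> qh x - wgrad \<Omega> p x" using elim(1) by simp
      have g2: "wgrad \<Omega> ?Wp x = wgrad \<Omega> p x - wgrad \<Omega> qh x" using elim(2) by simp
      have "wgrad \<Omega> ?Yp x = - wgrad \<Omega> ?Wp x" unfolding g1 g2 by simp
      then show ?case unfolding Nx_def Nv_def by simp
    qed
  qed
  then have E: "normUP \<Omega> lam ?Yu ?Yp = normUP \<Omega> lam ?Yu ?Wp"
    using N_int(2)[OF bo op UY PY] N_int(2)[OF bo op UY PW] by simp
  define I where "I = integral\<^sup>L ?M (Nx \<Omega> lam ?eu ?ep)"
  define n where "n = normUP \<Omega> lam ?eu ?ep"
  define y where "y = normUP \<Omega> lam ?Yu ?Wp"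
  have I0: "0 \<le> I" unfolding I_def by (rule N_int(3)[OF bo op Ue Pe])
  have nI: "n = sqrt I" unfolding n_def I_def by (rule N_int(2)[OF bo op Ue Pe])
  have n0: "0 \<le> n" unfolding nI by (rule real_sqrt_ge_zero[OF I0])
  have y0: "0 \<le> y" unfolding y_def N_int(2)[OF bo op UY PW] by (rule real_sqrt_ge_zero[OF N_int(3)[OF bo op UY PW]])
  have "sqrt I * sqrt I = \<bar>I\<bar>" by (rule real_sqrt_mult_self)
  then have nn: "n * n = I" unfolding nI using I0 by linarith
  have key: "\<alpha> * (n * n) \<le> M * n * y"
    using A Bs C D E unfolding nn[symmetric] n_def[symmetric] y_def[symmetric] I_def[symmetric] by simp
  have "n \<le> M / \<alpha> * y"
  proof (cases "n = 0")
    case True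
    then show ?thesis using M apos y0 by simp
  next
    case False
    then have "0 < n" using n0 by simp
    from key have "(\<alpha> * n) * n \<le> (M * y) * n" by (simp add: mult_ac)
    then have "\<alpha> * n \<le> M * y" using \<open>0 < n\<close> by simp
    then show ?thesis using apos by (simp add: field_simps)
  qed
  then show "normUP \<Omega> lam (\<lambda>x. u x - uh x) (\<lambda>x. p x - ph x)
      \<le> M / (1/2 * min lmin kmin) * normUP \<Omega> lam (\<lambda>x. u x - vh x) (\<lambda>x. p x - qh x)"
    unfolding n_def y_def \<alpha>_def .
qed


end
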